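(* Let $n\geq2$, $d\geq0$, and let $u:(d,\infty)\to\mathbb{R}^+$ be a solution of $$u''(x)=\Big[\frac{xu'(x)-u(x)}{2}+\frac{n-1}{u(x)}\Big]\big(1+(u'(x))^2\big)$$ satisfying, for a constant $\sigma>0$, the identity $$u(x)=2(n-1)x\int_x^\infty\frac{1}{t^2}\bigg\{\int_t^\infty\frac{s}{2}\,\frac{1+(u'(s))^2}{u(s)}\,e^{-\frac12\int_t^s z(1+(u'(z))^2)\,dz}\,ds\bigg\}dt+\sigma x\quad (x\in(d,\infty)).$$ Then for all $x\in(d,\infty)$, $$\sup_{s\in(x,\infty)}|u(s)-\sigma s|\leq\frac{2(n-1)}{\sigma x},\qquad \sup_{s\in(x,\infty)}|u'(s)-\sigma|\leq\frac{2(n-1)}{\sigma x^2}.$$ In particular $u$ extends to a solution $u_\sigma:(0,\infty)\to\mathbb{R}^+$ of the same equation. *)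

theory Defs
  imports "HOL-Analysis.Analysis"
begin

definition ode_solution_on ::
  "nat \<Rightarrow> real set \<Rightarrow> (real \<Rightarrow> real) \<Rightarrow> (real \<Rightarrow> real) \<Rightarrow> (real \<Rightarrow> real) \<Rightarrow> bool" where
  "ode_solution_on n I u u' u'' \<longleftrightarrow>
     (\<forall>x\<in>I. u x > 0
        \<and> (u has_real_derivative u' x) (at x)
        \<and> (u' has_real_derivative u'' x) (at x)
        \<and> u'' x = ((x * u' x - u x) / 2 + (real n - 1) / u x) * (1 + (u' x)\<^sup>2))"

definition exp_weight :: "(real \<Rightarrow> real) \<Rightarrow> real \<Rightarrow> real \<Rightarrow> real" where
  "exp_weight u' t s = exp (- (1/2) * integral {t..s} (\<lambda>z. z * (1 + (u' z)\<^sup>2)))"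

definition inner_integrand ::
  "(real \<Rightarrow> real) \<Rightarrow> (real \<Rightarrow> real) \<Rightarrow> real \<Rightarrow> real \<Rightarrow> real" where
  "inner_integrand u u' t s = s / 2 * (1 + (u' s)\<^sup>2) / u s * exp_weight u' t s"

definition inner_integral :: "(real \<Rightarrow> real) \<Rightarrow> (real \<Rightarrow> real) \<Rightarrow> real \<Rightarrow> real" where
  "inner_integral u u' t = integral {t..} (inner_integrand u u' t)"

end

theory Submission
  imports Defs
begin


lemma barrier:
  fixes f f' :: "real \<Rightarrow> real"
  assumes ab: "\<alpha> \<le> \<beta>" and der: "\<And>t. t \<in> {\<alpha>..\<beta>} \<Longrightarrow> (f has_real_derivative f' t) (at t)"
    and fend: "f \<beta> \<le> 0" and zero: "\<And>t. t \<in> {\<alpha>..\<beta>} \<Longrightarrow> f t = 0 \<Longrightarrow> f' t > 0"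
    and t: "t \<in> {\<alpha>..\<beta>}"
  shows "f t \<le> 0"
proof (rule ccontr)
  assume "\<not> f t \<le> 0" hence ft: "f t > 0" by simp
  have cont: "continuous_on {\<alpha>..\<beta>} f"
    using der by (meson DERIV_continuous continuous_at_imp_continuous_on)
  define Z where "Z = {t..\<beta>} \<inter> f -` {..0}"
  have bZ: "\<beta> \<in> Z" using t fend by (auto simp: Z_def)
  have cZ: "closed Z" unfolding Z_def
    by (rule continuous_closed_preimage) (use cont t in \<open>auto intro: continuous_on_subset\<close>)
  have bbZ: "bdd_below Z" by (auto simp: Z_def bdd_below_def)
  define z where "z = Inf Z"
  have zZ: "z \<in> Z" unfolding z_def using closed_contains_Inf[OF _ bbZ cZ] bZ by blast
  have zle: "\<And>s. s \<in> Z \<Longrightarrow> z \<le> s" unfolding z_def using bbZ by (simp add: cInf_lower)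
  have tz: "t \<le> z" "z \<le> \<beta>" "f z \<le> 0" using zZ by (auto simp: Z_def)
  have "\<exists>s. t \<le> s \<and> s \<le> z \<and> f s = 0"
    by (rule IVT2') (use tz ft t in \<open>auto intro: continuous_on_subset[OF cont]\<close>)
  then obtain s where s: "t \<le> s" "s \<le> z" "f s = 0" by blast
  hence "s \<in> Z" using tz by (auto simp: Z_def)
  hence "s = z" using zle s by fastforce
  hence fz: "f z = 0" using s by simp
  have tz2: "t < z" using fz ft tz by (cases "t = z") auto
  have zab: "z \<in> {\<alpha>..\<beta>}" using t tz by auto
  obtain dd where dd: "dd > 0" "\<And>h. h > 0 \<Longrightarrow> h < dd \<Longrightarrow> f (z - h) < f z"
    using DERIV_pos_inc_left[OF der[OF zab] zero[OF zab fz]] by blast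
  define h where "h = min (dd/2) ((z - t)/2)"
  have h: "h > 0" "h < dd" "h \<le> (z-t)/2" using dd tz2 unfolding h_def by (auto simp: min_def)
  have "f (z - h) < 0" using dd(2)[OF h(1,2)] fz by simp
  hence "z - h \<in> Z" using h tz by (auto simp: Z_def)
  hence "z \<le> z - h" by (rule zle)
  thus False using h by simp
qed

lemma int_bound:
  fixes g :: "real \<Rightarrow> real"
  assumes "a \<le> b" "g integrable_on {a..b}" "\<And>s. s \<in> {a..b} \<Longrightarrow> \<bar>g s\<bar> \<le> B"
  shows "\<bar>integral {a..b} g\<bar> \<le> B * (b - a)"
proof -
  have "norm (integral {a..b} g) \<le> integral {a..b} (\<lambda>_. B)"
    by (rule integral_norm_bound_integral) (use assms in auto)
  thus ?thesis using assms(1) by (simp add: mult.commute)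
qed



lemma local_exist:
  fixes f1 f2 :: "real \<Rightarrow> real \<Rightarrow> real \<Rightarrow> real" and \<alpha> \<beta> y0 w0 M L :: real
  assumes ab: "\<alpha> \<le> \<beta>" and L: "0 \<le> L" and hL: "4 * (\<beta> - \<alpha>) * L \<le> 1"
    and bnd1: "\<And>t y w. \<bar>f1 t y w\<bar> \<le> M" and bnd2: "\<And>t y w. \<bar>f2 t y w\<bar> \<le> M"
    and lip1: "\<And>t y w y' w'. \<bar>f1 t y w - f1 t y' w'\<bar> \<le> L * (\<bar>y - y'\<bar> + \<bar>w - w'\<bar>)"
    and lip2: "\<And>t y w y' w'. \<bar>f2 t y w - f2 t y' w'\<bar> \<le> L * (\<bar>y - y'\<bar> + \<bar>w - w'\<bar>)"
    and cont1: "\<And>y w. continuous_on {\<alpha>..\<beta>} y \<Longrightarrow> continuous_on {\<alpha>..\<beta>} w \<Longrightarrow>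
                  continuous_on {\<alpha>..\<beta>} (\<lambda>t. f1 t (y t) (w t))"
    and cont2: "\<And>y w. continuous_on {\<alpha>..\<beta>} y \<Longrightarrow> continuous_on {\<alpha>..\<beta>} w \<Longrightarrow>
                  continuous_on {\<alpha>..\<beta>} (\<lambda>t. f2 t (y t) (w t))"
  shows "\<exists>y w. y \<beta> = y0 \<and> w \<beta> = w0 \<and> (\<forall>t\<in>{\<alpha>..\<beta>}.
            (y has_real_derivative f1 t (y t) (w t)) (at t within {\<alpha>..\<beta>})
          \<and> (w has_real_derivative f2 t (y t) (w t)) (at t within {\<alpha>..\<beta>})
          \<and> \<bar>y t - y0\<bar> \<le> M * (\<beta> - t) \<and> \<bar>w t - w0\<bar> \<le> M * (\<beta> - t))"
proof -
  have M0: "0 \<le> M" using bnd1[of 0 0 0] by simp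
  define P :: "nat \<Rightarrow> (real \<Rightarrow> real) \<times> (real \<Rightarrow> real)" where
    "P = rec_nat (\<lambda>_. y0, \<lambda>_. w0) (\<lambda>k p. (\<lambda>t. y0 - integral {t..\<beta>} (\<lambda>s. f1 s (fst p s) (snd p s)),
                                         \<lambda>t. w0 - integral {t..\<beta>} (\<lambda>s. f2 s (fst p s) (snd p s))))"
  define Y where "Y k = fst (P k)" for k
  define W where "W k = snd (P k)" for k
  define g1 where "g1 k = (\<lambda>s. f1 s (Y k s) (W k s))" for k
  define g2 where "g2 k = (\<lambda>s. f2 s (Y k s) (W k s))" for k
  have Y0: "Y 0 = (\<lambda>_. y0)" and W0: "W 0 = (\<lambda>_. w0)" by (simp_all add: Y_def W_def P_def)
  have YS: "Y (Suc k) = (\<lambda>t. y0 - integral {t..\<beta>} (g1 k))" for k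
    by (simp add: Y_def W_def P_def g1_def)
  have WS: "W (Suc k) = (\<lambda>t. w0 - integral {t..\<beta>} (g2 k))" for k
    by (simp add: Y_def W_def P_def g2_def)
  have contk: "continuous_on {\<alpha>..\<beta>} (Y k) \<and> continuous_on {\<alpha>..\<beta>} (W k)" for k
  proof (induction k)
    case 0 then show ?case by (simp add: Y0 W0)
  next
    case (Suc k)
    have i1: "g1 k integrable_on {\<alpha>..\<beta>}" unfolding g1_def
      by (rule integrable_continuous_real, rule cont1) (use Suc in auto)
    have i2: "g2 k integrable_on {\<alpha>..\<beta>}" unfolding g2_def
      by (rule integrable_continuous_real, rule cont2) (use Suc in auto)
    show ?case unfolding YS WS
      using indefinite_integral_continuous_1'[OF i1] indefinite_integral_continuous_1'[OF i2]
      by (auto intro!: continuous_intros)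
  qed
  have gc1: "continuous_on {\<alpha>..\<beta>} (g1 k)" for k
    unfolding g1_def by (rule cont1) (use contk in auto)
  have gc2: "continuous_on {\<alpha>..\<beta>} (g2 k)" for k
    unfolding g2_def by (rule cont2) (use contk in auto)
  have gi1: "g1 k integrable_on {t..\<beta>}" if "t \<in> {\<alpha>..\<beta>}" for k t
    by (rule integrable_continuous_real, rule continuous_on_subset[OF gc1]) (use that in auto)
  have gi2: "g2 k integrable_on {t..\<beta>}" if "t \<in> {\<alpha>..\<beta>}" for k t
    by (rule integrable_continuous_real, rule continuous_on_subset[OF gc2]) (use that in auto)
  define B where "B k = 2 * M * (\<beta> - \<alpha>) / 2 ^ k" for k :: nat
  have diff: "\<forall>t\<in>{\<alpha>..\<beta>}. \<bar>Y (Suc k) t - Y k t\<bar> + \<bar>W (Suc k) t - W k t\<bar> \<le> B k" for k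
  proof (induction k)
    case 0
    show ?case
    proof
      fix t assume t: "t \<in> {\<alpha>..\<beta>}"
      have "\<bar>integral {t..\<beta>} (g1 0)\<bar> \<le> M * (\<beta> - t)"
        by (rule int_bound) (use t gi1 bnd1 in \<open>auto simp: g1_def\<close>)
      moreover have "\<bar>integral {t..\<beta>} (g2 0)\<bar> \<le> M * (\<beta> - t)"
        by (rule int_bound) (use t gi2 bnd2 in \<open>auto simp: g2_def\<close>)
      moreover have "M * (\<beta> - t) \<le> M * (\<beta> - \<alpha>)" using t M0 by (auto intro: mult_left_mono)
      ultimately show "\<bar>Y (Suc 0) t - Y 0 t\<bar> + \<bar>W (Suc 0) t - W 0 t\<bar> \<le> B 0"
        by (simp add: YS WS Y0 W0 B_def)
    qed
  next
    case (Suc k)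
    show ?case
    proof
      fix t assume t: "t \<in> {\<alpha>..\<beta>}"
      have b1: "\<bar>g1 (Suc k) s - g1 k s\<bar> \<le> L * B k" if "s \<in> {t..\<beta>}" for s
      proof -
        have "\<bar>g1 (Suc k) s - g1 k s\<bar> \<le> L * (\<bar>Y (Suc k) s - Y k s\<bar> + \<bar>W (Suc k) s - W k s\<bar>)"
          unfolding g1_def by (rule lip1)
        also have "\<dots> \<le> L * B k" using Suc that t L by (auto intro: mult_left_mono)
        finally show ?thesis .
      qed
      have b2: "\<bar>g2 (Suc k) s - g2 k s\<bar> \<le> L * B k" if "s \<in> {t..\<beta>}" for s
      proof -
        have "\<bar>g2 (Suc k) s - g2 k s\<bar> \<le> L * (\<bar>Y (Suc k) s - Y k s\<bar> + \<bar>W (Suc k) s - W k s\<bar>)"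
          unfolding g2_def by (rule lip2)
        also have "\<dots> \<le> L * B k" using Suc that t L by (auto intro: mult_left_mono)
        finally show ?thesis .
      qed
      have e1: "Y (Suc (Suc k)) t - Y (Suc k) t = - integral {t..\<beta>} (\<lambda>s. g1 (Suc k) s - g1 k s)"
        using Henstock_Kurzweil_Integration.integral_diff[OF gi1[OF t] gi1[OF t]] by (simp add: YS)
      have e2: "W (Suc (Suc k)) t - W (Suc k) t = - integral {t..\<beta>} (\<lambda>s. g2 (Suc k) s - g2 k s)"
        using Henstock_Kurzweil_Integration.integral_diff[OF gi2[OF t] gi2[OF t]] by (simp add: WS)
      have i1: "\<bar>integral {t..\<beta>} (\<lambda>s. g1 (Suc k) s - g1 k s)\<bar> \<le> L * B k * (\<beta> - t)"
        by (rule int_bound) (use t b1 in \<open>auto intro!: Henstock_Kurzweil_Integration.integrable_diff gi1\<close>)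
      have i2: "\<bar>integral {t..\<beta>} (\<lambda>s. g2 (Suc k) s - g2 k s)\<bar> \<le> L * B k * (\<beta> - t)"
        by (rule int_bound) (use t b2 in \<open>auto intro!: Henstock_Kurzweil_Integration.integrable_diff gi2\<close>)
      have Bk: "0 \<le> B k" using M0 ab by (simp add: B_def)
      have "L * B k * (\<beta> - t) \<le> L * B k * (\<beta> - \<alpha>)"
        using t L Bk by (auto intro!: mult_left_mono)
      moreover have "2 * (L * B k * (\<beta> - \<alpha>)) \<le> B (Suc k)"
      proof -
        have "2 * (L * B k * (\<beta> - \<alpha>)) = (4 * (\<beta> - \<alpha>) * L) * (B k / 2)" by (simp add: algebra_simps)
        also have "\<dots> \<le> 1 * (B k / 2)" using hL Bk by (intro mult_right_mono) auto
        finally show ?thesis by (simp add: B_def)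
      qed
      ultimately show "\<bar>Y (Suc (Suc k)) t - Y (Suc k) t\<bar> + \<bar>W (Suc (Suc k)) t - W (Suc k) t\<bar> \<le> B (Suc k)"
        unfolding e1 e2 using i1 i2 by linarith
    qed
  qed
  have sumB: "summable B"
  proof -
    have "summable (\<lambda>k. (2*M*(\<beta>-\<alpha>)) * (1/2::real)^k)" by (intro summable_mult summable_geometric) simp
    thus ?thesis unfolding B_def by (simp add: power_one_over)
  qed
  have conv: "\<exists>y w. (\<lambda>k. Y k t) \<longlonglongrightarrow> y \<and> (\<lambda>k. W k t) \<longlonglongrightarrow> w" if t: "t \<in> {\<alpha>..\<beta>}" for t
  proof -
    have d1: "norm (Y (Suc k) t - Y k t) \<le> B k" "norm (W (Suc k) t - W k t) \<le> B k" for k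
      using diff[of k, rule_format, OF t] abs_ge_zero[of "Y (Suc k) t - Y k t"] abs_ge_zero[of "W (Suc k) t - W k t"]
      by auto
    have s1: "summable (\<lambda>k. Y (Suc k) t - Y k t)"
      by (rule summable_comparison_test[OF _ sumB]) (use d1 in auto)
    have s2: "summable (\<lambda>k. W (Suc k) t - W k t)"
      by (rule summable_comparison_test[OF _ sumB]) (use d1 in auto)
    have "(\<lambda>k. Y 0 t + (\<Sum>j<k. Y (Suc j) t - Y j t)) \<longlonglongrightarrow> Y 0 t + suminf (\<lambda>k. Y (Suc k) t - Y k t)"
      by (intro tendsto_intros summable_LIMSEQ s1)
    moreover have "(\<lambda>k. W 0 t + (\<Sum>j<k. W (Suc j) t - W j t)) \<longlonglongrightarrow> W 0 t + suminf (\<lambda>k. W (Suc k) t - W k t)"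
      by (intro tendsto_intros summable_LIMSEQ s2)
    moreover have "(\<lambda>k. Y 0 t + (\<Sum>j<k. Y (Suc j) t - Y j t)) = (\<lambda>k. Y k t)"
      using sum_lessThan_telescope[of "\<lambda>j. Y j t"] by simp
    moreover have "(\<lambda>k. W 0 t + (\<Sum>j<k. W (Suc j) t - W j t)) = (\<lambda>k. W k t)"
      using sum_lessThan_telescope[of "\<lambda>j. W j t"] by simp
    ultimately show ?thesis by metis
  qed
  define y where "y t = lim (\<lambda>k. Y k t)" for t
  define w where "w t = lim (\<lambda>k. W k t)" for t
  have Yc: "(\<lambda>k. Y k t) \<longlonglongrightarrow> y t" and Wc: "(\<lambda>k. W k t) \<longlonglongrightarrow> w t" if "t \<in> {\<alpha>..\<beta>}" for t
    using conv[OF that] unfolding y_def w_def by (auto intro: convergentI simp: convergent_LIMSEQ_iff[symmetric])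
  define G1 where "G1 s = f1 s (y s) (w s)" for s
  define G2 where "G2 s = f2 s (y s) (w s)" for s
  have gconv1: "(\<lambda>k. g1 k s) \<longlonglongrightarrow> G1 s" and gconv2: "(\<lambda>k. g2 k s) \<longlonglongrightarrow> G2 s"
    if s: "s \<in> {\<alpha>..\<beta>}" for s
  proof -
    have z: "(\<lambda>k. L * (\<bar>Y k s - y s\<bar> + \<bar>W k s - w s\<bar>)) \<longlonglongrightarrow> 0"
    proof -
      have "(\<lambda>k. L * (\<bar>Y k s - y s\<bar> + \<bar>W k s - w s\<bar>)) \<longlonglongrightarrow> L * (\<bar>y s - y s\<bar> + \<bar>w s - w s\<bar>)"
        by (intro tendsto_intros Yc Wc s)
      thus ?thesis by simp
    qed
    have "(\<lambda>k. g1 k s - G1 s) \<longlonglongrightarrow> 0"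
      by (rule Lim_null_comparison[OF _ z]) (auto simp: g1_def G1_def intro!: always_eventually lip1)
    thus "(\<lambda>k. g1 k s) \<longlonglongrightarrow> G1 s" by (simp add: LIM_zero_iff)
    have "(\<lambda>k. g2 k s - G2 s) \<longlonglongrightarrow> 0"
      by (rule Lim_null_comparison[OF _ z]) (auto simp: g2_def G2_def intro!: always_eventually lip2)
    thus "(\<lambda>k. g2 k s) \<longlonglongrightarrow> G2 s" by (simp add: LIM_zero_iff)
  qed
  have inteq: "G1 integrable_on {t..\<beta>} \<and> y t = y0 - integral {t..\<beta>} G1 \<and>
               G2 integrable_on {t..\<beta>} \<and> w t = w0 - integral {t..\<beta>} G2" if t: "t \<in> {\<alpha>..\<beta>}" for t
  proof -
    have sub: "\<And>x. x \<in> {t..\<beta>} \<Longrightarrow> x \<in> {\<alpha>..\<beta>}" using t by auto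
    have dc1: "G1 integrable_on {t..\<beta>}" "(\<lambda>k. integral {t..\<beta>} (g1 k)) \<longlonglongrightarrow> integral {t..\<beta>} G1"
      using dominated_convergence[of g1 "{t..\<beta>}" "\<lambda>_. M" G1, OF gi1[OF t] integrable_const_ivl _ gconv1[OF sub]]
      by (auto simp: g1_def bnd1)
    have dc2: "G2 integrable_on {t..\<beta>}" "(\<lambda>k. integral {t..\<beta>} (g2 k)) \<longlonglongrightarrow> integral {t..\<beta>} G2"
      using dominated_convergence[of g2 "{t..\<beta>}" "\<lambda>_. M" G2, OF gi2[OF t] integrable_const_ivl _ gconv2[OF sub]]
      by (auto simp: g2_def bnd2)
    have "(\<lambda>k. Y (Suc k) t) \<longlonglongrightarrow> y0 - integral {t..\<beta>} G1" unfolding YS by (intro tendsto_intros dc1)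
    moreover have "(\<lambda>k. Y (Suc k) t) \<longlonglongrightarrow> y t" by (rule LIMSEQ_Suc[OF Yc[OF t]])
    moreover have "(\<lambda>k. W (Suc k) t) \<longlonglongrightarrow> w0 - integral {t..\<beta>} G2" unfolding WS by (intro tendsto_intros dc2)
    moreover have "(\<lambda>k. W (Suc k) t) \<longlonglongrightarrow> w t" by (rule LIMSEQ_Suc[OF Wc[OF t]])
    ultimately show ?thesis using dc1 dc2 LIMSEQ_unique by blast
  qed
  have ycont: "continuous_on {\<alpha>..\<beta>} y"
    by (rule continuous_on_eq[of _ "\<lambda>t. y0 - integral {t..\<beta>} G1"])
       (use inteq ab indefinite_integral_continuous_1'[of G1 \<alpha> \<beta>] in \<open>auto intro!: continuous_intros\<close>)
  have wcont: "continuous_on {\<alpha>..\<beta>} w"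
    by (rule continuous_on_eq[of _ "\<lambda>t. w0 - integral {t..\<beta>} G2"])
       (use inteq ab indefinite_integral_continuous_1'[of G2 \<alpha> \<beta>] in \<open>auto intro!: continuous_intros\<close>)
  have Gc1: "continuous_on {\<alpha>..\<beta>} G1" unfolding G1_def by (rule cont1[OF ycont wcont])
  have Gc2: "continuous_on {\<alpha>..\<beta>} G2" unfolding G2_def by (rule cont2[OF ycont wcont])
  show ?thesis
  proof (intro exI conjI ballI)
    show "y \<beta> = y0" using inteq[of \<beta>] ab by simp
    show "w \<beta> = w0" using inteq[of \<beta>] ab by simp
    fix t assume t: "t \<in> {\<alpha>..\<beta>}"
    have "((\<lambda>t. y0 - integral {t..\<beta>} G1) has_real_derivative (0 - - G1 t)) (at t within {\<alpha>..\<beta>})"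
      by (intro DERIV_diff DERIV_const integral_has_real_derivative' Gc1 t)
    hence "((\<lambda>t. y0 - integral {t..\<beta>} G1) has_real_derivative f1 t (y t) (w t)) (at t within {\<alpha>..\<beta>})"
      by (simp add: G1_def)
    thus "(y has_real_derivative f1 t (y t) (w t)) (at t within {\<alpha>..\<beta>})"
      by (rule has_field_derivative_transform_within[OF _ zero_less_one t]) (use inteq in \<open>auto simp: G1_def\<close>)
    have "((\<lambda>t. w0 - integral {t..\<beta>} G2) has_real_derivative (0 - - G2 t)) (at t within {\<alpha>..\<beta>})"
      by (intro DERIV_diff DERIV_const integral_has_real_derivative' Gc2 t)
    hence "((\<lambda>t. w0 - integral {t..\<beta>} G2) has_real_derivative f2 t (y t) (w t)) (at t within {\<alpha>..\<beta>})"
      by (simp add: G2_def)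
    thus "(w has_real_derivative f2 t (y t) (w t)) (at t within {\<alpha>..\<beta>})"
      by (rule has_field_derivative_transform_within[OF _ zero_less_one t]) (use inteq in \<open>auto simp: G2_def\<close>)
    have "\<bar>integral {t..\<beta>} G1\<bar> \<le> M * (\<beta> - t)"
      by (rule int_bound) (use t inteq bnd1 in \<open>auto simp: G1_def\<close>)
    thus "\<bar>y t - y0\<bar> \<le> M * (\<beta> - t)" using inteq[OF t] by simp
    have "\<bar>integral {t..\<beta>} G2\<bar> \<le> M * (\<beta> - t)"
      by (rule int_bound) (use t inteq bnd2 in \<open>auto simp: G2_def\<close>)
    thus "\<bar>w t - w0\<bar> \<le> M * (\<beta> - t)" using inteq[OF t] by simp
  qed
qed



lemma uniq_aux:
  fixes p q A B L :: real
  assumes "0 \<le> L" "\<bar>A\<bar> \<le> L * (\<bar>p\<bar> + \<bar>q\<bar>)" "\<bar>B\<bar> \<le> L * (\<bar>p\<bar> + \<bar>q\<bar>)"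
  shows "0 \<le> 2*p*A + 2*q*B + 4*L*(p^2 + q^2)"
proof -
  have "-(\<bar>p\<bar> * \<bar>A\<bar>) \<le> p * A" by (metis abs_ge_minus_self abs_mult minus_le_iff)
  moreover have "-(\<bar>q\<bar> * \<bar>B\<bar>) \<le> q * B" by (metis abs_ge_minus_self abs_mult minus_le_iff)
  moreover have "\<bar>p\<bar> * \<bar>A\<bar> \<le> \<bar>p\<bar> * (L * (\<bar>p\<bar> + \<bar>q\<bar>))" using assms by (intro mult_left_mono) auto
  moreover have "\<bar>q\<bar> * \<bar>B\<bar> \<le> \<bar>q\<bar> * (L * (\<bar>p\<bar> + \<bar>q\<bar>))" using assms by (intro mult_left_mono) auto
  moreover have "(\<bar>p\<bar> + \<bar>q\<bar>)^2 \<le> 2 * (p^2 + q^2)"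
  proof -
    have "0 \<le> (\<bar>p\<bar> - \<bar>q\<bar>)^2" by simp
    thus ?thesis by (simp add: power2_eq_square algebra_simps)
  qed
  moreover have "L * (\<bar>p\<bar> + \<bar>q\<bar>)^2 \<le> L * (2 * (p^2 + q^2))" using calculation(5) assms(1) by (intro mult_left_mono)
  ultimately show ?thesis by (simp add: power2_eq_square algebra_simps)
qed

lemma uniq:
  fixes yA wA yB wB aA bA aB bB :: "real \<Rightarrow> real"
  assumes ab: "\<alpha> \<le> \<beta>" and L: "0 \<le> L"
    and d1: "\<And>t. t \<in> {\<alpha>..\<beta>} \<Longrightarrow> (yA has_real_derivative aA t) (at t within {\<alpha>..\<beta>})"
    and d2: "\<And>t. t \<in> {\<alpha>..\<beta>} \<Longrightarrow> (wA has_real_derivative bA t) (at t within {\<alpha>..\<beta>})"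
    and d3: "\<And>t. t \<in> {\<alpha>..\<beta>} \<Longrightarrow> (yB has_real_derivative aB t) (at t within {\<alpha>..\<beta>})"
    and d4: "\<And>t. t \<in> {\<alpha>..\<beta>} \<Longrightarrow> (wB has_real_derivative bB t) (at t within {\<alpha>..\<beta>})"
    and la: "\<And>t. t \<in> {\<alpha>..\<beta>} \<Longrightarrow> \<bar>aA t - aB t\<bar> \<le> L * (\<bar>yA t - yB t\<bar> + \<bar>wA t - wB t\<bar>)"
    and lb: "\<And>t. t \<in> {\<alpha>..\<beta>} \<Longrightarrow> \<bar>bA t - bB t\<bar> \<le> L * (\<bar>yA t - yB t\<bar> + \<bar>wA t - wB t\<bar>)"
    and e1: "yA \<beta> = yB \<beta>" and e2: "wA \<beta> = wB \<beta>"
    and t: "t \<in> {\<alpha>..\<beta>}"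
  shows "yA t = yB t \<and> wA t = wB t"
proof -
  define Ef where "Ef s = (yA s - yB s)^2 + (wA s - wB s)^2" for s
  define phi where "phi s = Ef s * exp (4*L* s)" for s
  define D where "D s = (2*(yA s - yB s)*(aA s - aB s) + 2*(wA s - wB s)*(bA s - bB s) + 4*L*Ef s) * exp (4*L* s)" for s
  have dphi: "(phi has_real_derivative D s) (at s within {\<alpha>..\<beta>})" if s: "s \<in> {\<alpha>..\<beta>}" for s
    unfolding phi_def D_def Ef_def
    apply (rule derivative_eq_intros d1 d2 d3 d4 refl s)+
    apply (simp add: algebra_simps power2_eq_square)
    done
  have Dnn: "0 \<le> D s" if "s \<in> {\<alpha>..\<beta>}" for s
    unfolding D_def Ef_def using uniq_aux[OF L la[OF that] lb[OF that]] by simp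
  have cont: "continuous_on {\<alpha>..\<beta>} phi"
    using dphi by (meson DERIV_continuous continuous_on_eq_continuous_within)
  have "phi t \<le> phi \<beta>"
  proof (rule DERIV_nonneg_imp_increasing_open[of t \<beta> phi])
    show "t \<le> \<beta>" using t by simp
    show "continuous_on {t..\<beta>} phi" using t by (intro continuous_on_subset[OF cont]) auto
    fix x assume x: "t < x" "x < \<beta>"
    have "at x within {\<alpha>..\<beta>} = at x" using x t by (intro at_within_Icc_at) auto
    hence "DERIV phi x :> D x" using dphi[of x] x t by auto
    thus "\<exists>y. DERIV phi x :> y \<and> 0 \<le> y" using Dnn[of x] x t by auto
  qed
  moreover have "phi \<beta> = 0" using e1 e2 by (simp add: phi_def Ef_def)
  ultimately have "Ef t * exp (4*L* t) \<le> 0" by (simp add: phi_def)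
  hence "Ef t \<le> 0" by (simp add: mult_le_0_iff)
  hence "(yA t - yB t)^2 + (wA t - wB t)^2 = 0" unfolding Ef_def
    by (smt (verit) zero_le_power2)
  thus ?thesis by (smt (verit) sum_power2_eq_zero_iff)
qed



definition Fo :: "nat \<Rightarrow> real \<Rightarrow> real \<Rightarrow> real \<Rightarrow> real" where
  "Fo n x y w = ((x * w - y) / 2 + (real n - 1) / y) * (1 + w^2)"

definition clp :: "real \<Rightarrow> real \<Rightarrow> real \<Rightarrow> real" where
  "clp lo hi z = max lo (min hi z)"

lemma clp_lip: "lo \<le> hi \<Longrightarrow> \<bar>clp lo hi z - clp lo hi z'\<bar> \<le> \<bar>z - z'\<bar>"
  unfolding clp_def by (auto simp: max_def min_def abs_if)

lemma clp_range: "lo \<le> hi \<Longrightarrow> lo \<le> clp lo hi z \<and> clp lo hi z \<le> hi"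
  unfolding clp_def by auto

lemma clp_id: "lo \<le> z \<Longrightarrow> z \<le> hi \<Longrightarrow> clp lo hi z = z"
  unfolding clp_def by auto

lemma continuous_on_clp[continuous_intros]:
  "continuous_on S f \<Longrightarrow> continuous_on S (\<lambda>t. clp lo hi (f t))"
  unfolding clp_def by (intro continuous_intros)

definition GF :: "nat \<Rightarrow> real \<Rightarrow> real \<Rightarrow> real \<Rightarrow> real \<Rightarrow> real" where
  "GF n X c C W = (X * W + C) / 2 + (real n - 1) / c"

definition LF :: "nat \<Rightarrow> real \<Rightarrow> real \<Rightarrow> real \<Rightarrow> real \<Rightarrow> real" where
  "LF n X c C W = (1 + W^2) * (X / 2 + 1 / 2 + (real n - 1) / c^2) + 2 * W * GF n X c C W"

lemma g_bound:
  fixes x y w X c C W :: real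
  assumes "0 \<le> x" "x \<le> X" "0 < c" "c \<le> y" "y \<le> C" "\<bar>w\<bar> \<le> W" "1 \<le> n"
  shows "\<bar>(x * w - y) / 2 + (real n - 1) / y\<bar> \<le> GF n X c C W"
proof -
  have "\<bar>x * w\<bar> \<le> X * W" using assms by (simp add: abs_mult mult_mono)
  hence "\<bar>x * w - y\<bar> \<le> X * W + C" using assms by linarith
  moreover have "0 \<le> (real n - 1) / y" using assms by simp
  moreover have "(real n - 1) / y \<le> (real n - 1) / c" using assms by (intro divide_left_mono) auto
  moreover have "\<bar>(x * w - y) / 2 + (real n - 1) / y\<bar> \<le> \<bar>(x * w - y) / 2\<bar> + \<bar>(real n - 1) / y\<bar>"
    by (rule abs_triangle_ineq)
  moreover have "\<bar>(x * w - y) / 2\<bar> = \<bar>x * w - y\<bar> / 2" by simp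
  moreover have "\<bar>(real n - 1) / y\<bar> = (real n - 1) / y" using assms by simp
  ultimately have "\<bar>(x * w - y) / 2 + (real n - 1) / y\<bar> \<le> (X * W + C) / 2 + (real n - 1) / c"
    by (smt (verit, best) divide_right_mono)
  thus ?thesis unfolding GF_def .
qed

lemma g_lip:
  fixes x y w y' w' X c C W :: real
  assumes "0 \<le> x" "x \<le> X" "0 < c" "c \<le> y" "c \<le> y'" "1 \<le> n"
  shows "\<bar>((x * w - y) / 2 + (real n - 1) / y) - ((x * w' - y') / 2 + (real n - 1) / y')\<bar>
         \<le> X / 2 * \<bar>w - w'\<bar> + (1/2 + (real n - 1) / c^2) * \<bar>y - y'\<bar>"
proof -
  have yy: "c^2 \<le> y * y'" using assms by (simp add: power2_eq_square mult_mono)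
  have e: "((x * w - y) / 2 + (real n - 1) / y) - ((x * w' - y') / 2 + (real n - 1) / y')
        = x * (w - w') / 2 - (y - y') / 2 + (real n - 1) * (y' - y) / (y * y')"
    using assms by (simp add: field_simps)
  have a1: "\<bar>x * (w - w') / 2\<bar> \<le> X / 2 * \<bar>w - w'\<bar>" using assms by (simp add: abs_mult mult_right_mono)
  have a2: "\<bar>(real n - 1) * (y' - y) / (y * y')\<bar> \<le> (real n - 1) / c^2 * \<bar>y - y'\<bar>"
  proof -
    have "\<bar>(real n - 1) * (y' - y) / (y * y')\<bar> = (real n - 1) * \<bar>y - y'\<bar> / (y * y')"
      using assms by (simp add: abs_mult abs_minus_commute)
    also have "\<dots> \<le> (real n - 1) * \<bar>y - y'\<bar> / c^2"
      using assms yy by (intro divide_left_mono) auto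
    finally show ?thesis by simp
  qed
  have a3: "\<bar>(y - y') / 2\<bar> = 1/2 * \<bar>y - y'\<bar>" by simp
  show ?thesis unfolding e
    using a1 a2 a3 abs_triangle_ineq[of "x * (w - w') / 2 - (y - y') / 2" "(real n - 1) * (y' - y) / (y * y')"]
      abs_triangle_ineq4[of "x * (w - w') / 2" "(y - y') / 2"]
    by (simp add: algebra_simps)
qed

lemma Fo_lip:
  fixes x y w y' w' X c C W :: real
  assumes "0 \<le> x" "x \<le> X" "0 < c" "c \<le> y" "y \<le> C" "c \<le> y'" "y' \<le> C" "\<bar>w\<bar> \<le> W" "\<bar>w'\<bar> \<le> W" "1 \<le> n"
  shows "\<bar>Fo n x y w - Fo n x y' w'\<bar> \<le> LF n X c C W * (\<bar>y - y'\<bar> + \<bar>w - w'\<bar>)"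
proof -
  define g where "g = (x * w - y) / 2 + (real n - 1) / y"
  define g' where "g' = (x * w' - y') / 2 + (real n - 1) / y'"
  have W0: "0 \<le> W" using assms(8) by linarith
  have X0: "0 \<le> X" using assms by linarith
  have gl: "\<bar>g - g'\<bar> \<le> X / 2 * \<bar>w - w'\<bar> + (1/2 + (real n - 1) / c^2) * \<bar>y - y'\<bar>"
    unfolding g_def g'_def by (rule g_lip) (use assms in auto)
  have gb: "\<bar>g'\<bar> \<le> GF n X c C W" unfolding g'_def by (rule g_bound) (use assms in auto)
  have GF0: "0 \<le> GF n X c C W" using gb by linarith
  have ww: "\<bar>w^2 - w'^2\<bar> \<le> 2 * W * \<bar>w - w'\<bar>"
  proof -
    have "\<bar>w^2 - w'^2\<bar> = \<bar>w + w'\<bar> * \<bar>w - w'\<bar>" by (simp add: power2_eq_square algebra_simps abs_mult[symmetric])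
    also have "\<dots> \<le> (2 * W) * \<bar>w - w'\<bar>" using assms by (intro mult_right_mono) auto
    finally show ?thesis .
  qed
  have w2: "1 + w^2 \<le> 1 + W^2" using assms by (simp add: abs_le_square_iff[symmetric])
  have e: "Fo n x y w - Fo n x y' w' = (g - g') * (1 + w^2) + g' * (w^2 - w'^2)"
    using assms unfolding Fo_def g_def g'_def by (simp add: field_simps power2_eq_square)
  have t1: "\<bar>(g - g') * (1 + w^2)\<bar> \<le> (X / 2 * \<bar>w - w'\<bar> + (1/2 + (real n - 1) / c^2) * \<bar>y - y'\<bar>) * (1 + W^2)"
    unfolding abs_mult using gl w2 by (intro mult_mono) auto
  have t2: "\<bar>g' * (w^2 - w'^2)\<bar> \<le> GF n X c C W * (2 * W * \<bar>w - w'\<bar>)"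
    unfolding abs_mult using gb ww by (intro mult_mono) auto
  have c0: "0 \<le> (real n - 1) / c^2" using assms by simp
  have "\<bar>Fo n x y w - Fo n x y' w'\<bar> \<le> (X / 2 * \<bar>w - w'\<bar> + (1/2 + (real n - 1) / c^2) * \<bar>y - y'\<bar>) * (1 + W^2)
        + GF n X c C W * (2 * W * \<bar>w - w'\<bar>)"
    unfolding e using t1 t2 abs_triangle_ineq[of "(g - g') * (1 + w^2)" "g' * (w^2 - w'^2)"] by linarith
  also have "\<dots> \<le> LF n X c C W * (\<bar>y - y'\<bar> + \<bar>w - w'\<bar>)"
  proof -
    define a where "a = \<bar>y - y'\<bar>"
    define b where "b = \<bar>w - w'\<bar>"
    define K where "K = (real n - 1) / c^2"
    define G where "G = GF n X c C W"
    have a0: "0 \<le> a" "0 \<le> b" by (auto simp: a_def b_def)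
    have "(X / 2 * b + (1/2 + K) * a) * (1 + W^2) + G * (2 * W * b)
        = (1 + W^2) * (1/2 + K) * a + ((1 + W^2) * (X/2) + 2 * W * G) * b" by (simp add: algebra_simps)
    also have "\<dots> \<le> ((1 + W^2) * (X / 2 + 1 / 2 + K) + 2 * W * G) * a + ((1 + W^2) * (X / 2 + 1 / 2 + K) + 2 * W * G) * b"
    proof (rule add_mono; rule mult_right_mono)
      have K0: "0 \<le> K" using c0 by (simp add: K_def)
      have WG: "0 \<le> 2 * W * G" using W0 GF0 by (simp add: G_def)
      have "(1 + W^2) * (1/2 + K) \<le> (1 + W^2) * (X / 2 + 1 / 2 + K)" using X0 by (intro mult_left_mono) auto
      thus "(1 + W^2) * (1/2 + K) \<le> (1 + W^2) * (X / 2 + 1 / 2 + K) + 2 * W * G" using WG by linarith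
      have "(1 + W^2) * (X/2) \<le> (1 + W^2) * (X / 2 + 1 / 2 + K)" using K0 by (intro mult_left_mono) auto
      thus "(1 + W^2) * (X/2) + 2 * W * G \<le> (1 + W^2) * (X / 2 + 1 / 2 + K) + 2 * W * G" by linarith
      show "0 \<le> a" "0 \<le> b" by (rule a0)+
    qed
    also have "\<dots> = LF n X c C W * (a + b)" by (simp add: LF_def K_def G_def distrib_left)
    finally show ?thesis unfolding a_def b_def K_def G_def .
  qed
  finally show ?thesis .
qed

lemma Fo_bnd:
  fixes x y w X c C W :: real
  assumes "0 \<le> x" "x \<le> X" "0 < c" "c \<le> y" "y \<le> C" "\<bar>w\<bar> \<le> W" "1 \<le> n"
  shows "\<bar>Fo n x y w\<bar> \<le> GF n X c C W * (1 + W^2)"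
proof -
  have W0: "0 \<le> W" using assms by linarith
  have gb: "\<bar>(x * w - y) / 2 + (real n - 1) / y\<bar> \<le> GF n X c C W" by (rule g_bound) (use assms in auto)
  have w2: "1 + w^2 \<le> 1 + W^2" using assms W0 by (metis abs_le_square_iff abs_of_nonneg add_le_cancel_left)
  show ?thesis unfolding Fo_def abs_mult using gb w2 by (intro mult_mono) auto
qed



lemma ode_solD:
  assumes "ode_solution_on n I u u' u''" "x \<in> I"
  shows "u x > 0" "(u has_real_derivative u' x) (at x)" "(u' has_real_derivative u'' x) (at x)"
        "u'' x = ((x * u' x - u x) / 2 + (real n - 1) / u x) * (1 + (u' x)\<^sup>2)"
  using assms unfolding ode_solution_on_def by auto

lemma apriori:
  fixes n :: nat and \<sigma> a \<epsilon> e x0 K t :: real and V V' V'' :: "real \<Rightarrow> real"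
  assumes n: "n \<ge> 2" and \<sigma>: "\<sigma> > 0" and sol: "ode_solution_on n {a<..} V V' V''"
    and ae: "a < e" and \<epsilon>e: "\<epsilon> \<le> e" and \<epsilon>0: "0 < \<epsilon>" and ex: "e \<le> x0"
    and Q: "\<sigma> * x0 \<le> V x0" and P: "x0 * V' x0 - V x0 \<le> 0" and PK: "-K \<le> x0 * V' x0 - V x0"
    and K0: "0 \<le> K"
    and t: "t \<in> {e..x0}"
  shows "\<sigma> * t \<le> V t \<and> V t \<le> t * (V x0 / x0 + (2 * (real n - 1) / (\<sigma> * \<epsilon>) + K + 1) / \<epsilon>)
       \<and> \<sigma> - (2 * (real n - 1) / (\<sigma> * \<epsilon>) + K + 1) / \<epsilon> \<le> V' t
       \<and> V' t \<le> V x0 / x0 + (2 * (real n - 1) / (\<sigma> * \<epsilon>) + K + 1) / \<epsilon>"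
proof -
  define k where "k = 2 * (real n - 1) / (\<sigma> * \<epsilon>) + K + 1"
  have n1: "real n - 1 \<ge> 1" using n by simp
  have dom: "s \<in> {a<..}" if "s \<in> {e..x0}" for s using that ae by auto
  have spos: "s > 0" if "s \<in> {e..x0}" for s using that \<epsilon>0 \<epsilon>e by auto
  have sge: "s \<ge> \<epsilon>" if "s \<in> {e..x0}" for s using that \<epsilon>e by auto
  note S = ode_solD[OF sol dom]
  define p where "p s = s * V' s - V s" for s
  have dp: "(p has_real_derivative s * V'' s) (at s)" if s: "s \<in> {e..x0}" for s
  proof -
    have "((\<lambda>s. s * V' s - V s) has_real_derivative (s * V'' s)) (at s)"
      by (auto intro!: derivative_eq_intros S(2,3)[OF s])
    thus ?thesis unfolding p_def[abs_def] by simp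
  qed
  have ple: "p s \<le> 0" if s: "s \<in> {e..x0}" for s
  proof (rule barrier[of e x0 p "\<lambda>s. s * V'' s"])
    show "e \<le> x0" by (rule ex)
    show "\<And>t. t \<in> {e..x0} \<Longrightarrow> (p has_real_derivative t * V'' t) (at t)" by (rule dp)
    show "p x0 \<le> 0" using P by (simp add: p_def)
    show "s \<in> {e..x0}" by (rule s)
    fix t assume t: "t \<in> {e..x0}" and p0: "p t = 0"
    have "V'' t = ((real n - 1) / V t) * (1 + (V' t)\<^sup>2)" using S(4)[OF t] p0 by (simp add: p_def)
    moreover have "0 < (real n - 1) / V t" using S(1)[OF t] n1 by simp
    moreover have "0 < 1 + (V' t)\<^sup>2" by (simp add: add_pos_nonneg)
    ultimately have "0 < V'' t" by (metis mult_pos_pos)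
    thus "0 < t * V'' t" using spos[OF t] by simp
  qed
  have qmono: "V x0 / x0 \<le> V s / s" if s: "s \<in> {e..x0}" for s
  proof (rule DERIV_nonpos_imp_nonincreasing[of s x0 "\<lambda>s. V s / s"])
    show "s \<le> x0" using s by simp
    fix x assume x: "s \<le> x" "x \<le> x0"
    hence xs: "x \<in> {e..x0}" using s by auto
    have "((\<lambda>s. V s / s) has_real_derivative (V' x * x - V x * 1) / (x * x)) (at x)"
      by (intro DERIV_divide S(2)[OF xs] DERIV_ident) (use spos[OF xs] in simp)
    moreover have "(V' x * x - V x * 1) / (x * x) \<le> 0"
      using ple[OF xs] spos[OF xs] by (simp add: p_def divide_nonpos_pos algebra_simps)
    ultimately show "\<exists>y. ((\<lambda>s. V s / s) has_real_derivative y) (at x) \<and> y \<le> 0" by blast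
  qed
  have x0pos: "x0 > 0" using \<epsilon>0 \<epsilon>e ex by simp
  have Vlow: "\<sigma> * s \<le> V s" if s: "s \<in> {e..x0}" for s
  proof -
    have "\<sigma> \<le> V x0 / x0" using Q x0pos by (simp add: pos_le_divide_eq mult.commute)
    also have "\<dots> \<le> V s / s" by (rule qmono[OF s])
    finally show ?thesis using spos[OF s] by (simp add: pos_le_divide_eq mult.commute)
  qed
  have k2: "(real n - 1) / (\<sigma> * \<epsilon>) < k / 2" unfolding k_def using K0 by (simp add: field_simps)
  have pge: "-k \<le> p s" if s: "s \<in> {e..x0}" for s
  proof -
    have "-k - p s \<le> 0"
    proof (rule barrier[of e x0 "\<lambda>s. -k - p s" "\<lambda>s. - (s * V'' s)"])
      show "e \<le> x0" by (rule ex)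
      show "\<And>t. t \<in> {e..x0} \<Longrightarrow> ((\<lambda>s. -k - p s) has_real_derivative - (t * V'' t)) (at t)"
        using dp by (auto intro!: derivative_eq_intros)
      have kp: "0 \<le> 2 * (real n - 1) / (\<sigma> * \<epsilon>)" using n1 \<sigma> \<epsilon>0 by simp
      show "-k - p x0 \<le> 0" using PK K0 kp unfolding p_def k_def by linarith
      show "s \<in> {e..x0}" by (rule s)
      fix t assume t: "t \<in> {e..x0}" and p0: "-k - p t = 0"
      have "V'' t = (-k / 2 + (real n - 1) / V t) * (1 + (V' t)\<^sup>2)" using S(4)[OF t] p0 by (simp add: p_def)
      moreover have "(real n - 1) / V t \<le> (real n - 1) / (\<sigma> * \<epsilon>)"
      proof (rule divide_left_mono)
        show "\<sigma> * \<epsilon> \<le> V t" using Vlow[OF t] sge[OF t] \<sigma> by (smt (verit) mult_left_mono)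
        show "0 < V t * (\<sigma> * \<epsilon>)" using S(1)[OF t] \<sigma> \<epsilon>0 by simp
      qed (use n1 in simp)
      moreover have "0 < 1 + (V' t)\<^sup>2" by (simp add: add_pos_nonneg)
      moreover have "-k / 2 + (real n - 1) / V t < 0" using calculation(2) k2 by linarith
      ultimately have "V'' t < 0" by (simp add: mult_neg_pos)
      thus "0 < - (t * V'' t)" using spos[OF t] by (simp add: mult_pos_neg)
    qed
    thus ?thesis by simp
  qed
  have k0: "0 \<le> k" unfolding k_def using K0 n1 \<sigma> \<epsilon>0 by simp
  have rmono: "V s / s - k / s \<le> V x0 / x0 - k / x0" if s: "s \<in> {e..x0}" for s
  proof (rule DERIV_nonneg_imp_nondecreasing[of s x0 "\<lambda>s. V s / s - k / s"])
    show "s \<le> x0" using s by simp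
    fix x assume x: "s \<le> x" "x \<le> x0"
    hence xs: "x \<in> {e..x0}" using s by auto
    have "((\<lambda>s. V s / s - k / s) has_real_derivative
           (V' x * x - V x * 1) / (x * x) - (0 * x - k * 1) / (x * x)) (at x)"
      by (intro DERIV_diff DERIV_divide S(2)[OF xs] DERIV_ident DERIV_const) (use spos[OF xs] in simp_all)
    moreover have "0 \<le> (V' x * x - V x * 1) / (x * x) - (0 * x - k * 1) / (x * x)"
    proof -
      have "(V' x * x - V x * 1) / (x * x) - (0 * x - k * 1) / (x * x) = (p x + k) / (x * x)"
        by (simp add: p_def add_divide_distrib diff_divide_distrib algebra_simps)
      thus ?thesis using pge[OF xs] by simp
    qed
    ultimately show "\<exists>y. ((\<lambda>s. V s / s - k / s) has_real_derivative y) (at x) \<and> 0 \<le> y" by blast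
  qed
  have ts: "t > 0" by (rule spos[OF t])
  have vt: "V t / t \<le> V x0 / x0 + k / \<epsilon>"
  proof -
    have "V t / t \<le> V x0 / x0 - k / x0 + k / t" using rmono[OF t] by simp
    moreover have "0 \<le> k / x0" using k0 x0pos by simp
    moreover have "k / t \<le> k / \<epsilon>" using k0 sge[OF t] \<epsilon>0 by (intro divide_left_mono) auto
    ultimately show ?thesis by linarith
  qed
  have v1: "V t \<le> t * (V x0 / x0 + k / \<epsilon>)" using vt ts by (simp add: pos_divide_le_eq mult.commute)
  have eq: "V' t = V t / t + p t / t" using ts by (simp add: p_def field_simps)
  have pt: "p t / t \<le> 0" using ple[OF t] ts by (simp add: divide_nonpos_pos)
  have v2: "V' t \<le> V x0 / x0 + k / \<epsilon>" using eq pt vt by linarith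
  have v3: "\<sigma> - k / \<epsilon> \<le> V' t"
  proof -
    have "\<sigma> \<le> V t / t" using Vlow[OF t] ts by (simp add: pos_le_divide_eq mult.commute)
    moreover have "-k / t \<le> p t / t" using divide_right_mono[OF pge[OF t], of t] ts by simp
    moreover have "-k / \<epsilon> \<le> -k / t" using k0 sge[OF t] \<epsilon>0 by (simp add: divide_left_mono)
    ultimately show ?thesis using eq by simp
  qed
  show ?thesis using Vlow[OF t] v1 v2 v3 unfolding k_def by auto
qed



lemma improper_le:
  fixes g :: "real \<Rightarrow> real"
  assumes gi: "g integrable_on {a..}" and g0: "\<And>x. a \<le> x \<Longrightarrow> 0 \<le> g x"
    and bnd: "\<And>b. a \<le> b \<Longrightarrow> integral {a..b} g \<le> B"
  shows "integral {a..} g \<le> B"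
proof -
  define f where "f k = (\<lambda>x. if x \<in> {a..a + real k} then g x else 0)" for k :: nat
  have gsub: "g integrable_on {a..a + real k}" for k
    using integrable_on_subcbox[OF gi, of a "a + real k"] by auto
  have fi: "f k integrable_on {a..}" for k
    unfolding f_def integrable_restrict_Int using gsub[of k]
    by (metis Int_absorb2 atLeastAtMost_iff atLeast_iff subsetI)
  have fint: "integral {a..} (f k) = integral {a..a + real k} g" for k
    unfolding f_def integral_restrict_Int
    by (metis Int_absorb2 atLeastAtMost_iff atLeast_iff subsetI)
  have conv: "(\<lambda>k. f k x) \<longlonglongrightarrow> g x" if x: "x \<in> {a..}" for x
  proof (rule tendsto_eventually)
    obtain N :: nat where N: "x - a \<le> real N" using real_arch_simple by blast
    show "\<forall>\<^sub>F k in sequentially. f k x = g x"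
      unfolding eventually_sequentially
      by (rule exI[of _ N]) (use N x in \<open>auto simp: f_def\<close>)
  qed
  have dc: "(\<lambda>k. integral {a..} (f k)) \<longlonglongrightarrow> integral {a..} g"
    using dominated_convergence(2)[of f "{a..}" g g, OF fi gi _ conv] g0
    by (auto simp: f_def)
  show ?thesis
  proof (rule LIMSEQ_le_const2[OF dc])
    show "\<exists>N. \<forall>k\<ge>N. integral {a..} (f k) \<le> B" by (auto simp: fint intro!: bnd)
  qed
qed

lemma analysis:
  fixes n :: nat and d \<sigma> :: real and u u' u'' :: "real \<Rightarrow> real"
  assumes n2: "n \<ge> 2" and d0: "d \<ge> 0" and \<sigma>0: "\<sigma> > 0"
    and sol: "ode_solution_on n {d<..} u u' u''"
    and inner_int: "\<forall>t>d. inner_integrand u u' t integrable_on {t..}"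
    and outer_int: "\<forall>x>d. (\<lambda>t. inner_integral u u' t / t\<^sup>2) integrable_on {x..}"
    and ident: "\<forall>x>d. u x = 2 * (real n - 1) * x
                       * integral {x..} (\<lambda>t. inner_integral u u' t / t\<^sup>2) + \<sigma> * x"
    and s: "s > d"
  shows "\<sigma> * s \<le> u s \<and> u s - \<sigma> * s \<le> (real n - 1) / (\<sigma> * s)
       \<and> - (2 * (real n - 1) / (\<sigma> * s^2)) \<le> u' s - \<sigma> \<and> u' s - \<sigma> \<le> (real n - 1) / (\<sigma> * s^2)
       \<and> s * u' s - u s \<le> 0 \<and> - (2 * (real n - 1) / (\<sigma> * s)) \<le> s * u' s - u s"
proof -
  define I where "I t = inner_integral u u' t" for t
  define F where "F x = integral {x..} (\<lambda>t. I t / t\<^sup>2)" for x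
  have n1: "real n - 1 \<ge> 1" using n2 by simp
  note S = ode_solD[OF sol]
  have upos: "\<And>x. x > d \<Longrightarrow> u x > 0" using S(1) by auto
  have Inn: "0 \<le> I t" if t: "t > d" for t
    unfolding I_def inner_integral_def
  proof (rule integral_nonneg)
    show "inner_integrand u u' t integrable_on {t..}" using inner_int t by auto
    fix s assume "s \<in> {t..}"
    hence s: "s > d" "s > 0" using t d0 by auto
    show "0 \<le> inner_integrand u u' t s"
      unfolding inner_integrand_def exp_weight_def using s upos[OF s(1)]
      by (intro mult_nonneg_nonneg divide_nonneg_pos) (auto simp: add_nonneg_nonneg)
  qed
  have Fnn: "0 \<le> F x" if x: "x > d" for x
    unfolding F_def
    by (rule integral_nonneg) (use outer_int x Inn in \<open>auto simp: I_def\<close>)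
  have uF: "u x = 2 * (real n - 1) * x * F x + \<sigma> * x" if "x > d" for x
    using ident that by (simp add: F_def I_def)
  have ulow: "\<sigma> * x \<le> u x" if x: "x > d" for x
    using uF[OF x] Fnn[OF x] x d0 n1 by simp
  have u'cont: "isCont u' x" if "x > d" for x using S(3)[of x] that by (auto intro: DERIV_isCont)
  have Ibnd: "I t \<le> 1 / (\<sigma> * t)" if t: "t > d" for t
  proof -
    have t0: "t > 0" using t d0 by simp
    define h where "h z = z * (1 + (u' z)\<^sup>2)" for z
    define E where "E s = exp_weight u' t s" for s
    have Edef: "E s = exp (-(1/2) * integral {t..s} h)" for s
      unfolding E_def exp_weight_def h_def by simp
    define Gs where "Gs s = E s * ((1/2) * h s)" for s
    show ?thesis unfolding I_def inner_integral_def
    proof (rule improper_le)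
      show "inner_integrand u u' t integrable_on {t..}" using inner_int t by auto
      fix x assume "t \<le> x"
      hence x: "x > d" "x > 0" using t d0 by auto
      show "0 \<le> inner_integrand u u' t x"
        unfolding inner_integrand_def exp_weight_def using x upos[OF x(1)]
        by (intro mult_nonneg_nonneg divide_nonneg_pos) (auto simp: add_nonneg_nonneg)
    next
      fix b assume tb: "t \<le> b"
      have hc: "continuous_on {t..b} h"
        unfolding h_def using t u'cont
        by (intro continuous_at_imp_continuous_on ballI) (auto intro!: continuous_intros)
      have dE: "((\<lambda>s. - E s) has_real_derivative Gs s) (at s within {t..b})" if s: "s \<in> {t..b}" for s
      proof -
        have "((\<lambda>s. integral {t..s} h) has_real_derivative h s) (at s within {t..b})"
          by (rule integral_has_real_derivative[OF hc s])
        hence "((\<lambda>s. exp (-(1/2) * integral {t..s} h)) has_real_derivative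
                exp (-(1/2) * integral {t..s} h) * (-(1/2) * h s)) (at s within {t..b})"
          by (intro DERIV_chain2[OF DERIV_exp] DERIV_cmult)
        hence "((\<lambda>s. - exp (-(1/2) * integral {t..s} h)) has_real_derivative
                - (exp (-(1/2) * integral {t..s} h) * (-(1/2) * h s))) (at s within {t..b})"
          by (rule DERIV_minus)
        thus ?thesis unfolding Gs_def Edef by simp
      qed
      have ftc: "(Gs has_integral (- E b - - E t)) {t..b}"
        by (rule fundamental_theorem_of_calculus[OF tb])
           (use dE in \<open>auto simp: has_real_derivative_iff_has_vector_derivative[symmetric]\<close>)
      have Et: "E t = 1" by (simp add: Edef)
      have Eb: "E b > 0" by (simp add: Edef)
      have iint: "inner_integrand u u' t integrable_on {t..b}"
        using integrable_on_subcbox[of "inner_integrand u u' t" "{t..}" t b] inner_int t by auto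
      have "integral {t..b} (inner_integrand u u' t) \<le> integral {t..b} (\<lambda>s. (1 / (\<sigma> * t)) * Gs s)"
      proof (rule integral_le[OF iint])
        show "(\<lambda>s. 1 / (\<sigma> * t) * Gs s) integrable_on {t..b}"
        proof -
          have "Gs integrable_on {t..b}" using ftc by (auto simp: integrable_on_def)
          from integrable_cmul[OF this, of "1 / (\<sigma> * t)"] show ?thesis by simp
        qed
        fix s assume s: "s \<in> {t..b}"
        hence sd: "s > d" "s > 0" "t \<le> s" using t d0 by auto
        have Gs0: "0 \<le> Gs s" unfolding Gs_def h_def Edef using sd by (simp add: add_nonneg_nonneg)
        have eq: "inner_integrand u u' t s = Gs s / u s"
          unfolding inner_integrand_def Gs_def h_def E_def by (simp add: field_simps)
        have "\<sigma> * t \<le> u s" using ulow[OF sd(1)] \<sigma>0 sd by (smt (verit) mult_left_mono)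
        hence "Gs s / u s \<le> Gs s / (\<sigma> * t)" using Gs0 \<sigma>0 t0 upos[OF sd(1)] by (intro divide_left_mono) auto
        thus "inner_integrand u u' t s \<le> 1 / (\<sigma> * t) * Gs s" unfolding eq by simp
      qed
      also have "\<dots> = (1 / (\<sigma> * t)) * (1 - E b)"
        using integral_unique[OF ftc] Et by (simp add: integral_mult[symmetric])
      also have "\<dots> \<le> 1 / (\<sigma> * t)" using Eb \<sigma>0 t0 by (simp add: divide_right_mono)
      finally show "integral {t..b} (inner_integrand u u' t) \<le> 1 / (\<sigma> * t)" .
    qed
  qed
  have Fbnd: "F x \<le> 1 / (2 * \<sigma> * x^2)" if x: "x > d" for x
    unfolding F_def
  proof (rule improper_le)
    show "(\<lambda>t. I t / t\<^sup>2) integrable_on {x..}" using outer_int x by (simp add: I_def)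
    show "0 \<le> I t / t\<^sup>2" if "x \<le> t" for t using Inn[of t] that x by simp
    fix b assume xb: "x \<le> b"
    have x0: "x > 0" using x d0 by simp
    have ftc: "((\<lambda>t. 1 / (\<sigma> * t^3)) has_integral ((- 1 / (2 * \<sigma> * b^2)) - (- 1 / (2 * \<sigma> * x^2)))) {x..b}"
    proof (rule fundamental_theorem_of_calculus[OF xb])
      fix t assume t: "t \<in> {x..b}"
      hence t0: "t > 0" using x0 by auto
      have "((\<lambda>t. - 1 / (2 * \<sigma> * t^2)) has_real_derivative 1 / (\<sigma> * t^3)) (at t within {x..b})"
        using t0 \<sigma>0 by (auto intro!: derivative_eq_intros simp: field_simps power2_eq_square power3_eq_cube)
      thus "((\<lambda>t. - 1 / (2 * \<sigma> * t^2)) has_vector_derivative 1 / (\<sigma> * t^3)) (at t within {x..b})"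
        by (simp add: has_real_derivative_iff_has_vector_derivative)
    qed
    have "integral {x..b} (\<lambda>t. I t / t\<^sup>2) \<le> integral {x..b} (\<lambda>t. 1 / (\<sigma> * t^3))"
    proof (rule integral_le)
      show "(\<lambda>t. I t / t\<^sup>2) integrable_on {x..b}"
        using integrable_on_subcbox[of "\<lambda>t. I t / t\<^sup>2" "{x..}" x b] outer_int x by (auto simp: I_def)
      show "(\<lambda>t. 1 / (\<sigma> * t^3)) integrable_on {x..b}" using ftc by (auto simp: integrable_on_def)
      fix t assume t: "t \<in> {x..b}"
      hence t0: "t > 0" "t > d" using x0 x by auto
      have "I t / t\<^sup>2 \<le> (1 / (\<sigma> * t)) / t\<^sup>2" using divide_right_mono[OF Ibnd[OF t0(2)], of "t\<^sup>2"] by simp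
      thus "I t / t\<^sup>2 \<le> 1 / (\<sigma> * t^3)" by (simp add: power2_eq_square power3_eq_cube)
    qed
    also have "\<dots> = 1 / (2 * \<sigma> * x^2) - 1 / (2 * \<sigma> * b^2)" using integral_unique[OF ftc] by simp
    also have "\<dots> \<le> 1 / (2 * \<sigma> * x^2)" using \<sigma>0 by simp
    finally show "integral {x..b} (\<lambda>t. I t / t\<^sup>2) \<le> 1 / (2 * \<sigma> * x^2)" .
  qed
  have Fdiff: "0 \<le> F s' - F y \<and> F s' - F y \<le> (y - s') * (1 / (\<sigma> * s'^3))" if sy: "d < s'" "s' < y" for s' y
  proof -
    have s0: "s' > 0" using sy d0 by simp
    have i1: "(\<lambda>t. I t / t\<^sup>2) integrable_on {s'..y}"
      using integrable_on_subcbox[of "\<lambda>t. I t / t\<^sup>2" "{s'..}" s' y] outer_int sy by (auto simp: I_def)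
    have i2: "(\<lambda>t. I t / t\<^sup>2) integrable_on {y..}" using outer_int sy by (simp add: I_def)
    have "((\<lambda>t. I t / t\<^sup>2) has_integral (integral {s'..y} (\<lambda>t. I t / t\<^sup>2) + F y)) ({s'..y} \<union> {y..})"
      by (rule has_integral_Un) (use i1 i2 sy in \<open>auto simp: F_def\<close>)
    moreover have "{s'..y} \<union> {y..} = {s'..}" using sy by auto
    ultimately have "F s' = integral {s'..y} (\<lambda>t. I t / t\<^sup>2) + F y" unfolding F_def
      by (simp add: integral_unique)
    moreover have "0 \<le> integral {s'..y} (\<lambda>t. I t / t\<^sup>2)"
      by (rule integral_nonneg[OF i1]) (use Inn sy in auto)
    moreover have "integral {s'..y} (\<lambda>t. I t / t\<^sup>2) \<le> integral {s'..y} (\<lambda>t. 1 / (\<sigma> * s'^3))"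
    proof (rule integral_le[OF i1])
      show "(\<lambda>t. 1 / (\<sigma> * s'^3)) integrable_on {s'..y}" by auto
      fix t assume t: "t \<in> {s'..y}"
      hence t0: "t > 0" "t > d" "s' \<le> t" using s0 sy by auto
      have "I t / t\<^sup>2 \<le> (1 / (\<sigma> * t)) / t\<^sup>2" using divide_right_mono[OF Ibnd[OF t0(2)], of "t\<^sup>2"] by simp
      also have "\<dots> = 1 / (\<sigma> * t^3)" by (simp add: power2_eq_square power3_eq_cube)
      also have "\<dots> \<le> 1 / (\<sigma> * s'^3)" using t0 s0 \<sigma>0 by (intro divide_left_mono mult_left_mono power_mono) auto
      finally show "I t / t\<^sup>2 \<le> 1 / (\<sigma> * s'^3)" .
    qed
    ultimately show ?thesis using sy by simp
  qed
  have s0: "s > 0" using s d0 by simp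
  define D where "D = (u' s * s - u s * 1) / (s * s)"
  have dG: "((\<lambda>x. u x / x) has_real_derivative D) (at s)"
    unfolding D_def by (intro DERIV_divide S(2) DERIV_ident) (use s s0 in auto)
  have lim: "((\<lambda>y. (u y / y - u s / s) / (y - s)) \<longlongrightarrow> D) (at_right s)"
    using dG unfolding has_field_derivative_iff by (rule tendsto_within_subset) auto
  have quot: "- (2 * (real n - 1) / (\<sigma> * s^3)) \<le> (u y / y - u s / s) / (y - s) \<and> (u y / y - u s / s) / (y - s) \<le> 0"
    if y: "s < y" for y
  proof -
    have yd: "y > d" using y s by simp
    have G: "u x / x = \<sigma> + 2 * (real n - 1) * F x" if "x > d" for x
      using uF[OF that] that d0 by (simp add: field_simps)
    have e: "(u y / y - u s / s) = - (2 * (real n - 1)) * (F s - F y)" using G[OF yd] G[OF s] by (simp add: algebra_simps)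
    have ys: "y - s > 0" using y by simp
    have fd: "0 \<le> F s - F y" "F s - F y \<le> (y - s) * (1 / (\<sigma> * s^3))" using Fdiff[OF s y] by auto
    have eq3: "(u y / y - u s / s) / (y - s) = - (2 * (real n - 1)) * ((F s - F y) / (y - s))"
      unfolding e by simp
    have qa: "(F s - F y) / (y - s) \<le> 1 / (\<sigma> * s^3)" using fd ys by (simp add: pos_divide_le_eq mult.commute)
    have qb: "0 \<le> (F s - F y) / (y - s)" using fd ys by simp
    have q1: "2 * (real n - 1) * ((F s - F y) / (y - s)) \<le> 2 * (real n - 1) * (1 / (\<sigma> * s^3))"
      using qa n1 by (intro mult_left_mono) auto
    have q2: "0 \<le> 2 * (real n - 1) * ((F s - F y) / (y - s))" using qb n1 by (intro mult_nonneg_nonneg) auto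
    have q3: "(u y / y - u s / s) / (y - s) = - (2 * (real n - 1) * ((F s - F y) / (y - s)))"
      using eq3 by (simp only: mult_minus_left)
    have q4: "2 * (real n - 1) * (1 / (\<sigma> * s^3)) = 2 * (real n - 1) / (\<sigma> * s^3)" by simp
    show ?thesis unfolding q3 using q1 q2 q4 by linarith
  qed
  have ev1: "\<forall>\<^sub>F y in at_right s. (u y / y - u s / s) / (y - s) \<le> 0"
    by (rule eventually_mono[OF eventually_at_right_less]) (use quot in blast)
  have ev2: "\<forall>\<^sub>F y in at_right s. - (2 * (real n - 1) / (\<sigma> * s^3)) \<le> (u y / y - u s / s) / (y - s)"
    by (rule eventually_mono[OF eventually_at_right_less]) (use quot in blast)
  have Dle: "D \<le> 0" by (rule tendsto_upperbound[OF lim ev1]) simp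
  have Dge: "- (2 * (real n - 1) / (\<sigma> * s^3)) \<le> D" by (rule tendsto_lowerbound[OF lim ev2]) simp
  have u'eq: "u' s = s * D + u s / s" unfolding D_def using s0 by (simp add: field_simps)
  have Gs: "u s / s = \<sigma> + 2 * (real n - 1) * F s" using uF[OF s] s0 by (simp add: field_simps)
  have pe: "s * u' s - u s = s^2 * D" unfolding D_def using s0 by (simp add: field_simps power2_eq_square)
  have sD1: "s * D \<le> 0" using Dle s0 by (simp add: mult_nonneg_nonpos)
  have sD2: "- (2 * (real n - 1) / (\<sigma> * s^2)) \<le> s * D"
  proof -
    have "s * (- (2 * (real n - 1) / (\<sigma> * s^3))) \<le> s * D" using Dge s0 by (intro mult_left_mono) auto
    moreover have "s * (- (2 * (real n - 1) / (\<sigma> * s^3))) = - (2 * (real n - 1) / (\<sigma> * s^2))"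
      using s0 by (simp add: power2_eq_square power3_eq_cube)
    ultimately show ?thesis by simp
  qed
  have F1: "2 * (real n - 1) * F s \<le> (real n - 1) / (\<sigma> * s^2)"
  proof -
    have "2 * (real n - 1) * F s \<le> 2 * (real n - 1) * (1 / (2 * \<sigma> * s^2))"
      using Fbnd[OF s] n1 by (intro mult_left_mono) auto
    moreover have "2 * (real n - 1) * (1 / (2 * \<sigma> * s^2)) = (real n - 1) / (\<sigma> * s^2)"
      using \<sigma>0 s0 by (simp add: field_simps)
    ultimately show ?thesis by linarith
  qed
  have F0: "0 \<le> 2 * (real n - 1) * F s" using Fnn[OF s] n1 by simp
  have r1: "\<sigma> * s \<le> u s" by (rule ulow[OF s])
  have r2: "u s - \<sigma> * s \<le> (real n - 1) / (\<sigma> * s)"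
  proof -
    have "u s - \<sigma> * s = s * (2 * (real n - 1) * F s)" using uF[OF s] by (simp add: algebra_simps)
    also have "\<dots> \<le> s * ((real n - 1) / (\<sigma> * s^2))" using F1 s0 by (intro mult_left_mono) auto
    also have "\<dots> = (real n - 1) / (\<sigma> * s)" using s0 by (simp add: power2_eq_square)
    finally show ?thesis .
  qed
  have r3: "u' s - \<sigma> = s * D + 2 * (real n - 1) * F s" using u'eq Gs by simp
  have r5: "s * u' s - u s \<le> 0" using pe Dle by (simp add: mult_nonneg_nonpos)
  have r6: "- (2 * (real n - 1) / (\<sigma> * s)) \<le> s * u' s - u s"
  proof -
    have "s * (- (2 * (real n - 1) / (\<sigma> * s^2))) \<le> s * (s * D)" using sD2 s0 by (intro mult_left_mono) auto
    moreover have "s * (- (2 * (real n - 1) / (\<sigma> * s^2))) = - (2 * (real n - 1) / (\<sigma> * s))"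
      using s0 by (simp add: power2_eq_square)
    moreover have "s * (s * D) = s * u' s - u s" using pe by (simp add: power2_eq_square)
    ultimately show ?thesis by simp
  qed
  show ?thesis using r1 r2 r3 r5 r6 sD1 sD2 F0 F1 by linarith
qed



lemma glue_deriv:
  fixes f f2 :: "real \<Rightarrow> real"
  assumes ag: "\<alpha> < g" and f1: "(f has_real_derivative D) (at g within {\<alpha>..g})"
    and f2: "(f2 has_real_derivative D) (at g)" and eq: "f g = f2 g"
  shows "((\<lambda>x. if x \<le> g then f x else f2 x) has_real_derivative D) (at g)"
proof -
  define F where "F = (\<lambda>x. if x \<le> g then f x else f2 x)"
  have a1: "(F has_real_derivative D) (at g within {\<alpha><..g})"
  proof -
    have "(f has_real_derivative D) (at g within {\<alpha><..g})"
      by (rule DERIV_subset[OF f1]) auto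
    thus ?thesis
      by (rule has_field_derivative_transform_within[OF _ zero_less_one]) (use ag in \<open>auto simp: F_def\<close>)
  qed
  have a2: "(F has_real_derivative D) (at g within {g..})"
  proof -
    have "(f2 has_real_derivative D) (at g within {g..})" using f2 by (rule has_field_derivative_at_within)
    thus ?thesis
      by (rule has_field_derivative_transform_within[OF _ zero_less_one]) (use eq in \<open>auto simp: F_def\<close>)
  qed
  have "((\<lambda>y. (F y - F g) / (y - g)) \<longlongrightarrow> D) (at g within ({\<alpha><..g} \<union> {g..}))"
    using a1 a2 unfolding has_field_derivative_iff by (simp add: Lim_within_Un)
  moreover have "{\<alpha><..g} \<union> {g..} = {\<alpha><..}" using ag by auto
  moreover have "at g within {\<alpha><..} = at g" using ag by (intro at_within_open) auto
  ultimately have "((\<lambda>y. (F y - F g) / (y - g)) \<longlongrightarrow> D) (at g)" by simp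
  thus ?thesis unfolding F_def[symmetric] using has_field_derivative_iff[of F D g UNIV] by simp
qed

lemma glue:
  fixes V V' V'' y w :: "real \<Rightarrow> real" and a g h :: real
  assumes sol: "ode_solution_on n {a<..} V V' V''"
    and ag: "a < g" and h: "0 < h" and gha: "g - h < a"
    and dy: "\<And>t. t \<in> {g-h..g} \<Longrightarrow> (y has_real_derivative w t) (at t within {g-h..g})
               \<and> (w has_real_derivative Fo n t (y t) (w t)) (at t within {g-h..g}) \<and> y t > 0"
    and eqV: "\<And>t. t \<in> {a<..g} \<Longrightarrow> y t = V t \<and> w t = V' t"
  shows "ode_solution_on n {g-h<..} (\<lambda>x. if x \<le> g then y x else V x) (\<lambda>x. if x \<le> g then w x else V' x)
           (\<lambda>x. if x \<le> g then Fo n x (y x) (w x) else V'' x)"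
  unfolding ode_solution_on_def
proof (intro ballI conjI)
  note S = ode_solD[OF sol]
  have geq: "y g = V g" "w g = V' g" using eqV[of g] ag by auto
  have gin: "g \<in> {a<..}" using ag by simp
  have Vg: "V'' g = Fo n g (V g) (V' g)" using S(4)[OF gin] by (simp add: Fo_def)
  fix x assume x: "x \<in> {g-h<..}"
  show "0 < (if x \<le> g then y x else V x)" using dy[of x] S(1)[of x] x ag by auto
  show "(if x \<le> g then Fo n x (y x) (w x) else V'' x) =
        ((x * (if x \<le> g then w x else V' x) - (if x \<le> g then y x else V x)) / 2 + (real n - 1) / (if x \<le> g then y x else V x)) *
        (1 + (if x \<le> g then w x else V' x)\<^sup>2)"
    using S(4)[of x] x ag by (auto simp: Fo_def)
  consider "x < g" | "x = g" | "x > g" by linarith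
  then have dd: "((\<lambda>x. if x \<le> g then y x else V x) has_real_derivative (if x \<le> g then w x else V' x)) (at x)
         \<and> ((\<lambda>x. if x \<le> g then w x else V' x) has_real_derivative (if x \<le> g then Fo n x (y x) (w x) else V'' x)) (at x)"
  proof cases
    case 1
    have xi: "x \<in> {g-h..g}" using x 1 by auto
    have at: "at x within {g-h..g} = at x" using x 1 by (intro at_within_Icc_at) auto
    have d1: "(y has_real_derivative w x) (at x)" and d2: "(w has_real_derivative Fo n x (y x) (w x)) (at x)"
      using dy[OF xi] at by auto
    have "((\<lambda>x. if x \<le> g then y x else V x) has_real_derivative w x) (at x)"
      by (rule has_field_derivative_transform_within_open[OF d1, of "{..<g}"]) (use 1 in auto)
    moreover have "((\<lambda>x. if x \<le> g then w x else V' x) has_real_derivative Fo n x (y x) (w x)) (at x)"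
      by (rule has_field_derivative_transform_within_open[OF d2, of "{..<g}"]) (use 1 in auto)
    ultimately show ?thesis using 1 by simp
  next
    case 2
    have gi: "g \<in> {g-h..g}" using h by auto
    have "((\<lambda>x. if x \<le> g then y x else V x) has_real_derivative w g) (at g)"
      by (rule glue_deriv[of "g-h"]) (use dy[OF gi] h S(2)[OF gin] geq in auto)
    moreover have "((\<lambda>x. if x \<le> g then w x else V' x) has_real_derivative Fo n g (y g) (w g)) (at g)"
      by (rule glue_deriv[of "g-h"]) (use dy[OF gi] h S(3)[OF gin] geq Vg in auto)
    ultimately show ?thesis using 2 by simp
  next
    case 3
    have xa: "x \<in> {a<..}" using 3 ag by simp
    have "((\<lambda>x. if x \<le> g then y x else V x) has_real_derivative V' x) (at x)"
      by (rule has_field_derivative_transform_within_open[OF S(2)[OF xa], of "{g<..}"]) (use 3 in auto)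
    moreover have "((\<lambda>x. if x \<le> g then w x else V' x) has_real_derivative V'' x) (at x)"
      by (rule has_field_derivative_transform_within_open[OF S(3)[OF xa], of "{g<..}"]) (use 3 in auto)
    ultimately show ?thesis using 3 by simp
  qed
  thus "((\<lambda>x. if x \<le> g then y x else V x) has_real_derivative (if x \<le> g then w x else V' x)) (at x)"
    "((\<lambda>x. if x \<le> g then w x else V' x) has_real_derivative (if x \<le> g then Fo n x (y x) (w x) else V'' x)) (at x)"
    by auto
qed



lemma GF_nonneg: "0 \<le> X \<Longrightarrow> 0 \<le> W \<Longrightarrow> 0 \<le> C \<Longrightarrow> 0 < c \<Longrightarrow> 1 \<le> n \<Longrightarrow> 0 \<le> GF n X c C W"
  unfolding GF_def by simp

lemma LF_nonneg: "0 \<le> X \<Longrightarrow> 0 \<le> W \<Longrightarrow> 0 \<le> C \<Longrightarrow> 0 < c \<Longrightarrow> 1 \<le> n \<Longrightarrow> 0 \<le> LF n X c C W"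
  unfolding LF_def using GF_nonneg[of X W C c n] by (intro add_nonneg_nonneg mult_nonneg_nonneg) auto

lemma extension:
  fixes n :: nat and d \<sigma> :: real and u u' u'' :: "real \<Rightarrow> real"
  assumes n2: "n \<ge> 2" and d0: "d \<ge> 0" and \<sigma>0: "\<sigma> > 0"
    and sol: "ode_solution_on n {d<..} u u' u''"
    and inner_int: "\<forall>t>d. inner_integrand u u' t integrable_on {t..}"
    and outer_int: "\<forall>x>d. (\<lambda>t. inner_integral u u' t / t\<^sup>2) integrable_on {x..}"
    and ident: "\<forall>x>d. u x = 2 * (real n - 1) * x
                       * integral {x..} (\<lambda>t. inner_integral u u' t / t\<^sup>2) + \<sigma> * x"
  shows "\<exists>v v' v''. ode_solution_on n {0<..} v v' v'' \<and> (\<forall>x>d. v x = u x)"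
proof (cases "d = 0")
  case True
  thus ?thesis using sol by auto
next
  case False
  hence dpos: "d > 0" using d0 by simp
  have n1: "real n - 1 \<ge> 1" "(1::nat) \<le> n" using n2 by auto
  define x0 where "x0 = d + 1"
  have x0d: "x0 > d" "x0 > 0" using dpos by (auto simp: x0_def)
  note A = analysis[OF n2 d0 \<sigma>0 sol inner_int outer_int ident x0d(1)]
  define K where "K = 2 * (real n - 1) / (\<sigma> * x0)"
  have K0: "0 \<le> K" using n1 \<sigma>0 x0d by (simp add: K_def)
  define Q where "Q = u x0 / x0"
  have Q\<sigma>: "\<sigma> \<le> Q" using A x0d by (simp add: Q_def pos_le_divide_eq mult.commute)
  define kf where "kf \<epsilon> = 2 * (real n - 1) / (\<sigma> * \<epsilon>) + K + 1" for \<epsilon>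
  define C0f where "C0f \<epsilon> = x0 * (Q + kf \<epsilon> / \<epsilon>)" for \<epsilon>
  define W0f where "W0f \<epsilon> = \<sigma> + Q + kf \<epsilon> / \<epsilon>" for \<epsilon>
  have kf0: "0 \<le> kf \<epsilon>" if "0 < \<epsilon>" for \<epsilon> unfolding kf_def using that n1 \<sigma>0 K0 by simp
  note S = ode_solD[OF sol]
  have agree: "\<forall>x>d. V' x = u' x"
    if "a \<le> d" "ode_solution_on n {a<..} V V' V''" "\<forall>x>d. V x = u x" for a V V' V''
  proof (intro allI impI)
    fix x assume x: "x > d"
    have "(V has_real_derivative u' x) (at x)"
      by (rule has_field_derivative_transform_within_open[OF S(2)[of x], of "{d<..}"]) (use x that in auto)
    moreover have "(V has_real_derivative V' x) (at x)" using ode_solD(2)[OF that(2), of x] x that by auto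
    ultimately show "V' x = u' x" by (rule DERIV_unique[symmetric])
  qed
  have bounds: "\<sigma> * \<epsilon> \<le> V t \<and> V t \<le> C0f \<epsilon> \<and> \<bar>V' t\<bar> \<le> W0f \<epsilon>"
    if ad: "a \<le> d" and solV: "ode_solution_on n {a<..} V V' V''" and agV: "\<forall>x>d. V x = u x"
      and ae: "a < e" and \<epsilon>0: "0 < \<epsilon>" and \<epsilon>e: "\<epsilon> \<le> e" and ex: "e \<le> x0" and t: "t \<in> {e..x0}"
    for a V V' V'' \<epsilon> e t
  proof -
    have Vx0: "V x0 = u x0" "V' x0 = u' x0" using agV agree[OF ad solV agV] x0d by auto
    have B: "\<sigma> * t \<le> V t \<and> V t \<le> t * (V x0 / x0 + kf \<epsilon> / \<epsilon>)
       \<and> \<sigma> - kf \<epsilon> / \<epsilon> \<le> V' t \<and> V' t \<le> V x0 / x0 + kf \<epsilon> / \<epsilon>"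
      unfolding kf_def
      by (rule apriori[OF n2 \<sigma>0 solV ae \<epsilon>e \<epsilon>0 ex _ _ _ K0 t]) (use A Vx0 in \<open>auto simp: K_def\<close>)
    have te: "\<epsilon> \<le> t" "t \<le> x0" using t \<epsilon>e by auto
    have kq: "0 \<le> Q + kf \<epsilon> / \<epsilon>" using Q\<sigma> \<sigma>0 kf0[OF \<epsilon>0] \<epsilon>0 by simp
    have m1: "\<sigma> * \<epsilon> \<le> \<sigma> * t" using te \<sigma>0 by simp
    have m2: "t * (Q + kf \<epsilon> / \<epsilon>) \<le> C0f \<epsilon>" unfolding C0f_def using te kq by (intro mult_right_mono) auto
    have m3: "\<sigma> - kf \<epsilon> / \<epsilon> \<ge> - W0f \<epsilon>" using Q\<sigma> \<sigma>0 by (simp add: W0f_def)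
    have m4: "Q + kf \<epsilon> / \<epsilon> \<le> W0f \<epsilon>" using \<sigma>0 by (simp add: W0f_def)
    have B1: "\<sigma> * t \<le> V t" "V t \<le> t * (Q + kf \<epsilon> / \<epsilon>)" "\<sigma> - kf \<epsilon> / \<epsilon> \<le> V' t" "V' t \<le> Q + kf \<epsilon> / \<epsilon>"
      using B unfolding Vx0 Q_def by auto
    have "\<sigma> * \<epsilon> \<le> V t" using m1 B1 by linarith
    moreover have "V t \<le> C0f \<epsilon>" using m2 B1 by linarith
    moreover have "\<bar>V' t\<bar> \<le> W0f \<epsilon>" using m3 m4 B1 by (simp add: abs_le_iff)
    ultimately show ?thesis by blast
  qed
  have compat: "V1 z = V2 z \<and> V1' z = V2' z"
    if a1: "0 < a1" "a1 \<le> d" "ode_solution_on n {a1<..} V1 V1' V1''" "\<forall>x>d. V1 x = u x"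
      and a2: "0 < a2" "a2 \<le> d" "ode_solution_on n {a2<..} V2 V2' V2''" "\<forall>x>d. V2 x = u x"
      and z: "a1 < z" "a2 < z"
    for a1 V1 V1' V1'' a2 V2 V2' V2'' z
  proof (cases "z > d")
    case True
    thus ?thesis using a1(4) a2(4) agree[OF a1(2-4)] agree[OF a2(2-4)] by auto
  next
    case False
    hence zx: "z \<le> x0" unfolding x0_def by simp
    have z0: "0 < z" using a1 z by simp
    define L where "L = LF n x0 (\<sigma> * z) (C0f z) (W0f z) + 1"
    have bd1: "\<sigma> * z \<le> V1 t \<and> V1 t \<le> C0f z \<and> \<bar>V1' t\<bar> \<le> W0f z" if "t \<in> {z..x0}" for t
      by (rule bounds[OF a1(2-4) z(1) z0 order_refl zx that])
    have bd2: "\<sigma> * z \<le> V2 t \<and> V2 t \<le> C0f z \<and> \<bar>V2' t\<bar> \<le> W0f z" if "t \<in> {z..x0}" for t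
      by (rule bounds[OF a2(2-4) z(2) z0 order_refl zx that])
    have LF0: "0 \<le> LF n x0 (\<sigma> * z) (C0f z) (W0f z)"
    proof (rule LF_nonneg)
      show "0 \<le> W0f z" using bd1[of z] z0 zx by auto
      show "0 \<le> C0f z" using bd1[of z] z0 zx \<sigma>0 by (smt (verit) atLeastAtMost_iff mult_pos_pos)
    qed (use x0d \<sigma>0 z0 n1 in auto)
    have dom1: "t \<in> {a1<..}" "t \<in> {a2<..}" if "t \<in> {z..x0}" for t using that z by auto
    have "V1 z = V2 z \<and> V1' z = V2' z"
    proof (rule uniq[where \<alpha>=z and \<beta>=x0 and L=L and yA=V1 and wA=V1' and yB=V2 and wB=V2'
                   and aA=V1' and bA=V1'' and aB=V2' and bB=V2'' and t=z])
      show "z \<le> x0" by (rule zx)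
      show "0 \<le> L" using LF0 by (simp add: L_def)
      show "z \<in> {z..x0}" using zx by simp
      show "V1 x0 = V2 x0" "V1' x0 = V2' x0"
        using a1(4) a2(4) agree[OF a1(2-4)] agree[OF a2(2-4)] x0d by auto
      fix t assume t: "t \<in> {z..x0}"
      show "(V1 has_real_derivative V1' t) (at t within {z..x0})"
        using ode_solD(2)[OF a1(3) dom1(1)[OF t]] by (rule has_field_derivative_at_within)
      show "(V1' has_real_derivative V1'' t) (at t within {z..x0})"
        using ode_solD(3)[OF a1(3) dom1(1)[OF t]] by (rule has_field_derivative_at_within)
      show "(V2 has_real_derivative V2' t) (at t within {z..x0})"
        using ode_solD(2)[OF a2(3) dom1(2)[OF t]] by (rule has_field_derivative_at_within)
      show "(V2' has_real_derivative V2'' t) (at t within {z..x0})"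
        using ode_solD(3)[OF a2(3) dom1(2)[OF t]] by (rule has_field_derivative_at_within)
      have "\<bar>V1' t - V2' t\<bar> \<le> 1 * (\<bar>V1 t - V2 t\<bar> + \<bar>V1' t - V2' t\<bar>)" by simp
      also have "\<dots> \<le> L * (\<bar>V1 t - V2 t\<bar> + \<bar>V1' t - V2' t\<bar>)" using LF0 by (intro mult_right_mono) (auto simp: L_def)
      finally show "\<bar>V1' t - V2' t\<bar> \<le> L * (\<bar>V1 t - V2 t\<bar> + \<bar>V1' t - V2' t\<bar>)" .
      have e1: "V1'' t = Fo n t (V1 t) (V1' t)" using ode_solD(4)[OF a1(3) dom1(1)[OF t]] by (simp add: Fo_def)
      have e2: "V2'' t = Fo n t (V2 t) (V2' t)" using ode_solD(4)[OF a2(3) dom1(2)[OF t]] by (simp add: Fo_def)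
      have "\<bar>Fo n t (V1 t) (V1' t) - Fo n t (V2 t) (V2' t)\<bar> \<le> LF n x0 (\<sigma> * z) (C0f z) (W0f z) * (\<bar>V1 t - V2 t\<bar> + \<bar>V1' t - V2' t\<bar>)"
        by (rule Fo_lip) (use t z0 \<sigma>0 bd1[OF t] bd2[OF t] n1 in auto)
      also have "\<dots> \<le> L * (\<bar>V1 t - V2 t\<bar> + \<bar>V1' t - V2' t\<bar>)" by (intro mult_right_mono) (auto simp: L_def)
      finally show "\<bar>V1'' t - V2'' t\<bar> \<le> L * (\<bar>V1 t - V2 t\<bar> + \<bar>V1' t - V2' t\<bar>)" using e1 e2 by simp
    qed
    thus ?thesis .
  qed
  define good where "good a \<longleftrightarrow> 0 < a \<and> a \<le> d \<and> (\<exists>V V' V''. ode_solution_on n {a<..} V V' V'' \<and> (\<forall>x>d. V x = u x))" for a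
  define rf where "rf \<epsilon> = \<sigma> * \<epsilon> / 2" for \<epsilon>
  define Cf where "Cf \<epsilon> = C0f \<epsilon> + rf \<epsilon>" for \<epsilon>
  define Wf where "Wf \<epsilon> = W0f \<epsilon> + rf \<epsilon>" for \<epsilon>
  define Lf where "Lf \<epsilon> = LF n x0 (rf \<epsilon>) (Cf \<epsilon>) (Wf \<epsilon>) + 1" for \<epsilon>
  define Mf where "Mf \<epsilon> = Wf \<epsilon> + GF n x0 (rf \<epsilon>) (Cf \<epsilon>) (Wf \<epsilon>) * (1 + (Wf \<epsilon>)^2)" for \<epsilon>
  define hf where "hf \<epsilon> = min (\<epsilon> / 2) (min (rf \<epsilon> / Mf \<epsilon>) (min (1 / (4 * Lf \<epsilon>)) 1))" for \<epsilon>
  have cst: "0 < rf \<epsilon> \<and> 0 < Wf \<epsilon> \<and> 0 \<le> Cf \<epsilon> \<and> 1 \<le> Lf \<epsilon> \<and> 0 < Mf \<epsilon> \<and> 0 < hf \<epsilon>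
      \<and> hf \<epsilon> \<le> \<epsilon> / 2 \<and> hf \<epsilon> * Mf \<epsilon> \<le> rf \<epsilon> \<and> 4 * hf \<epsilon> * Lf \<epsilon> \<le> 1 \<and> hf \<epsilon> \<le> 1
      \<and> 0 \<le> GF n x0 (rf \<epsilon>) (Cf \<epsilon>) (Wf \<epsilon>)" if \<epsilon>0: "0 < \<epsilon>" for \<epsilon>
  proof -
    have r: "0 < rf \<epsilon>" using \<sigma>0 \<epsilon>0 by (simp add: rf_def)
    have kq: "0 \<le> Q + kf \<epsilon> / \<epsilon>" using Q\<sigma> \<sigma>0 kf0[OF \<epsilon>0] \<epsilon>0 by simp
    have W: "0 < Wf \<epsilon>" using r kq \<sigma>0 by (simp add: Wf_def W0f_def)
    have C: "0 \<le> Cf \<epsilon>" using r kq x0d by (simp add: Cf_def C0f_def)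
    have G: "0 \<le> GF n x0 (rf \<epsilon>) (Cf \<epsilon>) (Wf \<epsilon>)" using GF_nonneg[of x0 "Wf \<epsilon>" "Cf \<epsilon>" "rf \<epsilon>" n] W C r x0d n1 by simp
    have L: "1 \<le> Lf \<epsilon>" using LF_nonneg[of x0 "Wf \<epsilon>" "Cf \<epsilon>" "rf \<epsilon>" n] W C r x0d n1 by (simp add: Lf_def)
    have M: "0 < Mf \<epsilon>" using W G by (simp add: Mf_def add_pos_nonneg)
    have h0: "0 < hf \<epsilon>" using \<epsilon>0 r M L by (simp add: hf_def)
    have h1: "hf \<epsilon> \<le> rf \<epsilon> / Mf \<epsilon>" "hf \<epsilon> \<le> 1 / (4 * Lf \<epsilon>)" "hf \<epsilon> \<le> \<epsilon> / 2" "hf \<epsilon> \<le> 1"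
      unfolding hf_def by (meson min.cobounded1 min.cobounded2 order_trans)+
    have "hf \<epsilon> * Mf \<epsilon> \<le> rf \<epsilon>" using h1(1) M by (simp add: pos_le_divide_eq)
    moreover have "4 * hf \<epsilon> * Lf \<epsilon> \<le> 1" using h1(2) L by (simp add: pos_le_divide_eq mult.commute mult.left_commute)
    ultimately show ?thesis using r W C L M h0 h1 G by auto
  qed
  have step: "good (a - 3 / 4 * hf \<epsilon>)" if \<epsilon>0: "0 < \<epsilon>" and \<epsilon>a: "\<epsilon> \<le> a" and ga: "good a" for \<epsilon> a
  proof -
    obtain V V' V'' where solV: "ode_solution_on n {a<..} V V' V''" and agV: "\<forall>x>d. V x = u x"
      and a0: "0 < a" and ad: "a \<le> d" using ga unfolding good_def by blast
    note SV = ode_solD[OF solV]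
    define h where "h = hf \<epsilon>"
    define r where "r = rf \<epsilon>"
    define c where "c = rf \<epsilon>"
    define C where "C = Cf \<epsilon>"
    define W where "W = Wf \<epsilon>"
    define L where "L = Lf \<epsilon>"
    define M where "M = Mf \<epsilon>"
    note cs = cst[OF \<epsilon>0, folded h_def r_def C_def W_def L_def M_def]
    have cr: "c = r" by (simp add: c_def r_def)
    have cdef: "c = \<sigma> * \<epsilon> / 2" "C = C0f \<epsilon> + \<sigma> * \<epsilon> / 2" "W = W0f \<epsilon> + \<sigma> * \<epsilon> / 2" "r = \<sigma> * \<epsilon> / 2"
      by (simp_all add: c_def C_def Cf_def W_def Wf_def r_def rf_def)
    have se: "0 < \<sigma> * \<epsilon>" using \<sigma>0 \<epsilon>0 by simp
    define g where "g = a + h / 4"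
    have gs: "a < g" "\<epsilon> \<le> g" "g \<le> x0" "0 < g - h" "g - h < a"
      using cs \<epsilon>a a0 ad by (auto simp: g_def x0_def)
    have g_dom: "g \<in> {a<..}" using gs by simp
    define y0 where "y0 = V g"
    define w0 where "w0 = V' g"
    have bg: "\<sigma> * \<epsilon> \<le> y0 \<and> y0 \<le> C0f \<epsilon> \<and> \<bar>w0\<bar> \<le> W0f \<epsilon>"
      unfolding y0_def w0_def using gs by (intro bounds[OF ad solV agV gs(1) \<epsilon>0 gs(2) gs(3)]) auto
    define f1 where "f1 t y w = clp (-W) W w" for t y w :: real
    define f2 where "f2 t y w = Fo n (clp 0 x0 t) (clp c C y) (clp (-W) W w)" for t y w :: real
    have WW: "-W \<le> W" using cs by simp
    have cC: "c \<le> C" using bg cs \<sigma>0 \<epsilon>0 by (simp add: c_def C_def Cf_def rf_def) 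
    have c0: "0 < c" using cs by (simp add: c_def r_def)
    have x00: "0 \<le> x0" using x0d by simp
    have clpx: "0 \<le> clp 0 x0 t \<and> clp 0 x0 t \<le> x0" for t using clp_range[OF x00] by blast
    have clpy: "c \<le> clp c C y \<and> clp c C y \<le> C" for y using clp_range[OF cC] by blast
    have clpw: "\<bar>clp (-W) W w\<bar> \<le> W" for w using clp_range[OF WW, of w] by (simp add: abs_le_iff)
    have LF_L: "LF n x0 c C W \<le> L" by (simp add: L_def Lf_def c_def C_def W_def)
    have LF0: "0 \<le> LF n x0 c C W" using LF_nonneg[of x0 W C c n] x00 cs c0 n1 by (simp add: C_def W_def)
    have exist: "\<exists>y w. y g = y0 \<and> w g = w0 \<and> (\<forall>t\<in>{g - h..g}.
            (y has_real_derivative f1 t (y t) (w t)) (at t within {g - h..g})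
          \<and> (w has_real_derivative f2 t (y t) (w t)) (at t within {g - h..g})
          \<and> \<bar>y t - y0\<bar> \<le> M * (g - t) \<and> \<bar>w t - w0\<bar> \<le> M * (g - t))"
    proof (rule local_exist)
      show "g - h \<le> g" using cs by simp
      show "0 \<le> L" using cs by simp
      show "4 * (g - (g - h)) * L \<le> 1" using cs by simp
      fix t y w y' w' :: real
      show "\<bar>f1 t y w\<bar> \<le> M"
      proof -
        have "0 \<le> GF n x0 (rf \<epsilon>) (Cf \<epsilon>) (Wf \<epsilon>) * (1 + (Wf \<epsilon>)^2)"
          using cst[OF \<epsilon>0] by (intro mult_nonneg_nonneg) auto
        hence "W \<le> M" by (simp add: M_def Mf_def W_def)
        thus ?thesis using clpw[of w] unfolding f1_def by linarith
      qed
      show "\<bar>f2 t y w\<bar> \<le> M"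
      proof -
        have "\<bar>f2 t y w\<bar> \<le> GF n x0 c C W * (1 + W^2)"
          unfolding f2_def by (rule Fo_bnd) (use clpx clpy clpw c0 n1 in auto)
        thus ?thesis using cs by (simp add: M_def Mf_def c_def C_def W_def)
      qed
      show "\<bar>f1 t y w - f1 t y' w'\<bar> \<le> L * (\<bar>y - y'\<bar> + \<bar>w - w'\<bar>)"
      proof -
        have "\<bar>f1 t y w - f1 t y' w'\<bar> \<le> \<bar>w - w'\<bar>" unfolding f1_def by (rule clp_lip[OF WW])
        also have "\<dots> \<le> 1 * (\<bar>y - y'\<bar> + \<bar>w - w'\<bar>)" by simp
        also have "\<dots> \<le> L * (\<bar>y - y'\<bar> + \<bar>w - w'\<bar>)" using cs by (intro mult_right_mono) auto
        finally show ?thesis .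
      qed
      show "\<bar>f2 t y w - f2 t y' w'\<bar> \<le> L * (\<bar>y - y'\<bar> + \<bar>w - w'\<bar>)"
      proof -
        have "\<bar>f2 t y w - f2 t y' w'\<bar> \<le> LF n x0 c C W * (\<bar>clp c C y - clp c C y'\<bar> + \<bar>clp (-W) W w - clp (-W) W w'\<bar>)"
          unfolding f2_def by (rule Fo_lip) (use clpx clpy clpw c0 n1 in auto)
        also have "\<dots> \<le> LF n x0 c C W * (\<bar>y - y'\<bar> + \<bar>w - w'\<bar>)"
          using clp_lip[OF cC, of y y'] clp_lip[OF WW, of w w'] LF0 by (intro mult_left_mono) auto
        also have "\<dots> \<le> L * (\<bar>y - y'\<bar> + \<bar>w - w'\<bar>)" using LF_L by (intro mult_right_mono) auto
        finally show ?thesis .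
      qed
    next
      fix y w :: "real \<Rightarrow> real"
      assume cy: "continuous_on {g - h..g} y" and cw: "continuous_on {g - h..g} w"
      show "continuous_on {g - h..g} (\<lambda>t. f1 t (y t) (w t))" unfolding f1_def by (intro continuous_intros cw)
      have nz: "clp c C (y t) \<noteq> 0" for t using clpy[of "y t"] c0 by auto
      show "continuous_on {g - h..g} (\<lambda>t. f2 t (y t) (w t))" unfolding f2_def Fo_def
        by (intro continuous_intros cy cw) (use nz in auto)
    qed
    then obtain y w where yg: "y g = y0" and wg: "w g = w0"
      and ydw: "\<And>t. t \<in> {g - h..g} \<Longrightarrow> (y has_real_derivative f1 t (y t) (w t)) (at t within {g - h..g})
          \<and> (w has_real_derivative f2 t (y t) (w t)) (at t within {g - h..g})
          \<and> \<bar>y t - y0\<bar> \<le> M * (g - t) \<and> \<bar>w t - w0\<bar> \<le> M * (g - t)" by blast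
    have box: "c \<le> y t \<and> y t \<le> C \<and> \<bar>w t\<bar> \<le> W \<and> 0 \<le> t \<and> t \<le> x0" if t: "t \<in> {g - h..g}" for t
    proof -
      have "M * (g - t) \<le> M * h" using t cs by (intro mult_left_mono) auto
      also have "\<dots> \<le> r" using cs by (simp add: mult.commute)
      finally have Mr: "M * (g - t) \<le> r" .
      have "\<bar>y t - y0\<bar> \<le> r" "\<bar>w t - w0\<bar> \<le> r" using ydw[OF t] Mr by auto
      moreover have "c = \<sigma> * \<epsilon> - r" by (simp add: c_def r_def rf_def)
      moreover have "C = C0f \<epsilon> + r" by (simp add: C_def Cf_def r_def)
      moreover have "W = W0f \<epsilon> + r" by (simp add: W_def Wf_def r_def)
      ultimately show ?thesis using bg t gs by (auto simp: abs_le_iff)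
    qed
    have f1e: "f1 t (y t) (w t) = w t" if "t \<in> {g - h..g}" for t
      using box[OF that] unfolding f1_def by (intro clp_id) (auto simp: abs_le_iff)
    have f2e: "f2 t (y t) (w t) = Fo n t (y t) (w t)" if "t \<in> {g - h..g}" for t
      using box[OF that] unfolding f2_def by (simp add: clp_id abs_le_iff)
    have dy: "(y has_real_derivative w t) (at t within {g-h..g})
               \<and> (w has_real_derivative Fo n t (y t) (w t)) (at t within {g-h..g}) \<and> y t > 0"
      if t: "t \<in> {g-h..g}" for t
      using ydw[OF t] f1e[OF t] f2e[OF t] box[OF t] c0 by auto
    have eqV: "y t = V t \<and> w t = V' t" if t: "t \<in> {a<..g}" for t
    proof -
      have tt: "a < t" "t \<le> g" using t by auto
      have sub: "{t..g} \<subseteq> {g-h..g}" using tt gs by auto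
      have dom: "s \<in> {a<..}" if "s \<in> {t..g}" for s using that tt by auto
      have bV: "\<sigma> * \<epsilon> \<le> V s \<and> V s \<le> C0f \<epsilon> \<and> \<bar>V' s\<bar> \<le> W0f \<epsilon>" if s: "s \<in> {t..g}" for s
        by (rule bounds[OF ad solV agV tt(1) \<epsilon>0]) (use \<epsilon>a tt gs s in auto)
      show ?thesis
      proof (rule uniq[where \<alpha>=t and \<beta>=g and L=L and yA=y and wA=w and yB=V and wB=V'
                   and aA=w and bA="\<lambda>s. Fo n s (y s) (w s)" and aB=V' and bB=V'' and t=t])
        show "t \<le> g" "t \<in> {t..g}" using tt by auto
        show "0 \<le> L" using cs by simp
        show "y g = V g" "w g = V' g" using yg wg by (simp_all add: y0_def w0_def)
        fix s assume s: "s \<in> {t..g}"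
        have sg: "s \<in> {g-h..g}" using s sub by auto
        show "(y has_real_derivative w s) (at s within {t..g})"
          using dy[OF sg] sub by (auto intro: DERIV_subset)
        show "(w has_real_derivative Fo n s (y s) (w s)) (at s within {t..g})"
          using dy[OF sg] sub by (auto intro: DERIV_subset)
        show "(V has_real_derivative V' s) (at s within {t..g})"
          using SV(2)[OF dom[OF s]] by (rule has_field_derivative_at_within)
        show "(V' has_real_derivative V'' s) (at s within {t..g})"
          using SV(3)[OF dom[OF s]] by (rule has_field_derivative_at_within)
        have "\<bar>w s - V' s\<bar> \<le> 1 * (\<bar>y s - V s\<bar> + \<bar>w s - V' s\<bar>)" by simp
        also have "\<dots> \<le> L * (\<bar>y s - V s\<bar> + \<bar>w s - V' s\<bar>)" using cs by (intro mult_right_mono) auto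
        finally show "\<bar>w s - V' s\<bar> \<le> L * (\<bar>y s - V s\<bar> + \<bar>w s - V' s\<bar>)" .
        have e2: "V'' s = Fo n s (V s) (V' s)" using SV(4)[OF dom[OF s]] by (simp add: Fo_def)
        have vb: "c \<le> V s" "V s \<le> C" "\<bar>V' s\<bar> \<le> W"
          using bV[OF s] cdef se by auto
        have "\<bar>Fo n s (y s) (w s) - Fo n s (V s) (V' s)\<bar> \<le> LF n x0 c C W * (\<bar>y s - V s\<bar> + \<bar>w s - V' s\<bar>)"
          by (rule Fo_lip) (use box[OF sg] vb c0 n1 in auto)
        also have "\<dots> \<le> L * (\<bar>y s - V s\<bar> + \<bar>w s - V' s\<bar>)" using LF_L by (intro mult_right_mono) auto
        finally show "\<bar>Fo n s (y s) (w s) - V'' s\<bar> \<le> L * (\<bar>y s - V s\<bar> + \<bar>w s - V' s\<bar>)" using e2 by simp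
      qed
    qed
    have newsol: "ode_solution_on n {g-h<..} (\<lambda>x. if x \<le> g then y x else V x) (\<lambda>x. if x \<le> g then w x else V' x)
           (\<lambda>x. if x \<le> g then Fo n x (y x) (w x) else V'' x)"
      by (rule glue[OF solV gs(1) _ gs(5) dy eqV]) (use cs in \<open>auto simp: h_def\<close>)
    have agn: "\<forall>x>d. (if x \<le> g then y x else V x) = u x"
      using eqV agV ad by auto
    have "g - h = a - 3 / 4 * hf \<epsilon>" by (simp add: g_def h_def)
    thus ?thesis unfolding good_def using newsol agn gs ad cs by (auto simp: h_def)
  qed
  have iter: "\<exists>a. good a \<and> a < \<epsilon>" if \<epsilon>0: "0 < \<epsilon>" for \<epsilon>
  proof -
    define h where "h = 3 / 4 * hf \<epsilon>"
    have h0: "0 < h" using cst[OF \<epsilon>0] by (simp add: h_def)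
    have gd: "good d" unfolding good_def using dpos sol by auto
    have N: "\<exists>a. good a \<and> (a < \<epsilon> \<or> a \<le> d - real N * h)" for N
    proof (induction N)
      case 0 thus ?case using gd by auto
    next
      case (Suc N)
      then obtain a where ga: "good a" and ah: "a < \<epsilon> \<or> a \<le> d - real N * h" by blast
      show ?case
      proof (cases "a < \<epsilon>")
        case True thus ?thesis using ga by auto
      next
        case False
        hence "good (a - h)" using step[OF \<epsilon>0 _ ga] by (simp add: h_def)
        moreover have "a - h \<le> d - real (Suc N) * h" using ah False by (simp add: algebra_simps)
        ultimately show ?thesis by blast
      qed
    qed
    obtain N :: nat where "d / h < real N" using reals_Archimedean2 by blast
    hence "d - real N * h < 0" using h0 by (simp add: pos_divide_less_eq mult.commute)
    thus ?thesis using N[of N] \<epsilon>0 by force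
  qed
  have "\<forall>x. \<exists>p. 0 < x \<longrightarrow> (0 < fst p \<and> fst p < x \<and> fst p \<le> d \<and>
          ode_solution_on n {fst p<..} (fst (snd p)) (fst (snd (snd p))) (snd (snd (snd p))) \<and> (\<forall>z>d. fst (snd p) z = u z))"
  proof (intro allI impI)
    fix x :: real
    show "\<exists>p. 0 < x \<longrightarrow> (0 < fst p \<and> fst p < x \<and> fst p \<le> d \<and>
          ode_solution_on n {fst p<..} (fst (snd p)) (fst (snd (snd p))) (snd (snd (snd p))) \<and> (\<forall>z>d. fst (snd p) z = u z))"
    proof (cases "0 < x")
      case True
      obtain a where "good a" "a < x" using iter[OF True] by blast
      then obtain V V' V'' where "0 < a" "a \<le> d" "ode_solution_on n {a<..} V V' V''" "\<forall>z>d. V z = u z"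
        unfolding good_def by blast
      thus ?thesis using \<open>a < x\<close> by (intro exI[of _ "(a, V, V', V'')"]) auto
    qed auto
  qed
  then obtain P where P: "\<And>x. 0 < x \<Longrightarrow> 0 < fst (P x) \<and> fst (P x) < x \<and> fst (P x) \<le> d \<and>
          ode_solution_on n {fst (P x)<..} (fst (snd (P x))) (fst (snd (snd (P x)))) (snd (snd (snd (P x))))
          \<and> (\<forall>z>d. fst (snd (P x)) z = u z)"
    by metis
  define A where "A x = fst (P x)" for x
  define VV where "VV x = fst (snd (P x))" for x
  define VV' where "VV' x = fst (snd (snd (P x)))" for x
  define VV'' where "VV'' x = snd (snd (snd (P x)))" for x
  have PP: "0 < A x" "A x < x" "A x \<le> d" "ode_solution_on n {A x<..} (VV x) (VV' x) (VV'' x)" "\<forall>z>d. VV x z = u z"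
    if "0 < x" for x using P[OF that] unfolding A_def VV_def VV'_def VV''_def by auto
  have cmp: "VV p z = VV q z \<and> VV' p z = VV' q z" if "0 < p" "0 < q" "A p < z" "A q < z" for p q z
    by (rule compat[OF PP(1)[OF that(1)] PP(3)[OF that(1)] PP(4,5)[OF that(1)] PP(1)[OF that(2)] PP(3)[OF that(2)] PP(4,5)[OF that(2)] that(3,4)])
  define v where "v x = VV x x" for x
  define v' where "v' x = VV' x x" for x
  define v'' where "v'' x = VV'' x x" for x
  have "ode_solution_on n {0<..} v v' v''"
    unfolding ode_solution_on_def
  proof (intro ballI conjI)
    fix x :: real assume "x \<in> {0<..}"
    hence x: "0 < x" by simp
    have xin: "x \<in> {A x<..}" using PP(2)[OF x] by simp
    note SX = ode_solD[OF PP(4)[OF x] xin]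
    show "0 < v x" using SX(1) by (simp add: v_def)
    have eqv: "VV x z = v z \<and> VV' x z = v' z" if "z \<in> {A x<..}" for z
    proof -
      have z: "0 < z" "A x < z" using that PP(1)[OF x] by auto
      show ?thesis using cmp[OF x z(1) z(2) PP(2)[OF z(1)]] by (simp add: v_def v'_def)
    qed
    have "(v has_real_derivative VV' x x) (at x)"
      by (rule has_field_derivative_transform_within_open[OF SX(2), of "{A x<..}"]) (use xin eqv in auto)
    thus "(v has_real_derivative v' x) (at x)" by (simp add: v'_def)
    have "(v' has_real_derivative VV'' x x) (at x)"
      by (rule has_field_derivative_transform_within_open[OF SX(3), of "{A x<..}"]) (use xin eqv in auto)
    thus "(v' has_real_derivative v'' x) (at x)" by (simp add: v''_def)
    show "v'' x = ((x * v' x - v x) / 2 + (real n - 1) / v x) * (1 + (v' x)\<^sup>2)"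
      using SX(4) by (simp add: v_def v'_def v''_def)
  qed
  moreover have "\<forall>x>d. v x = u x" using PP(5) dpos by (auto simp: v_def)
  ultimately show ?thesis by blast
qed


theorem lemma3:
  fixes n :: nat and d \<sigma> :: real and u u' u'' :: "real \<Rightarrow> real"
  assumes "n \<ge> 2" and "d \<ge> 0" and "\<sigma> > 0"
    and sol: "ode_solution_on n {d<..} u u' u''"
    and inner_int: "\<forall>t>d. inner_integrand u u' t integrable_on {t..}"
    and outer_int: "\<forall>x>d. (\<lambda>t. inner_integral u u' t / t\<^sup>2) integrable_on {x..}"
    and ident: "\<forall>x>d. u x = 2 * (real n - 1) * x
                       * integral {x..} (\<lambda>t. inner_integral u u' t / t\<^sup>2) + \<sigma> * x"
  shows "(\<forall>x>d. \<forall>s>x. \<bar>u s - \<sigma> * s\<bar> \<le> 2 * (real n - 1) / (\<sigma> * x))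
       \<and> (\<forall>x>d. \<forall>s>x. \<bar>u' s - \<sigma>\<bar> \<le> 2 * (real n - 1) / (\<sigma> * x\<^sup>2))
       \<and> (\<exists>v v' v''. ode_solution_on n {0<..} v v' v'' \<and> (\<forall>x>d. v x = u x))"
proof (intro conjI allI impI)
  have n1: "real n - 1 \<ge> 1" using assms(1) by simp
  fix x s assume x: "x > d" and s: "s > x"
  have sd: "s > d" using x s by simp
  have x0: "x > 0" using x assms(2) by simp
  note A = analysis[OF assms(1-3) sol inner_int outer_int ident sd]
  have a1: "(real n - 1) / (\<sigma> * s) \<le> (real n - 1) / (\<sigma> * x)"
    using n1 assms(3) x0 s by (intro divide_left_mono mult_left_mono mult_pos_pos) auto
  have a2: "(real n - 1) / (\<sigma> * x) \<le> 2 * (real n - 1) / (\<sigma> * x)"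
    using n1 assms(3) x0 by (simp add: divide_right_mono)
  show "\<bar>u s - \<sigma> * s\<bar> \<le> 2 * (real n - 1) / (\<sigma> * x)" using A a1 a2 by (simp add: abs_le_iff)
  have b1: "2 * (real n - 1) / (\<sigma> * s^2) \<le> 2 * (real n - 1) / (\<sigma> * x^2)"
    using n1 assms(3) x0 s by (intro divide_left_mono mult_left_mono mult_pos_pos power_mono) auto
  have b2: "(real n - 1) / (\<sigma> * s^2) \<le> 2 * (real n - 1) / (\<sigma> * s^2)"
    using n1 assms(3) x0 s by (simp add: divide_right_mono)
  show "\<bar>u' s - \<sigma>\<bar> \<le> 2 * (real n - 1) / (\<sigma> * x\<^sup>2)" using A b1 b2 by (simp add: abs_le_iff)
next
  show "\<exists>v v' v''. ode_solution_on n {0<..} v v' v'' \<and> (\<forall>x>d. v x = u x)"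
    by (rule extension[OF assms(1-3) sol inner_int outer_int ident])
qed

end
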